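(* Let $\mathcal{H}$ be a complex Hilbert space and let $T\in\mathcal{B}(\mathcal{H})$ be a completely hyperexpansive operator which is $A_j(T)$-regular for $j=1,2,3$, where $A_n(T)=-\sum_{k=0}^n(-1)^k\binom{n}{k}T^{*k}T^k$. Then the compression $P_{\overline{\mathcal{R}(A_2(T))}}T|_{\overline{\mathcal{R}(A_2(T))}}$ of $T$ to $\overline{\mathcal{R}(A_2(T))}$ is a completely non-isometric quasinormal contraction.
   Context: $T$ is completely hyperexpansive if $\sum_{k=0}^n(-1)^k\binom{n}{k}T^{*k}T^k\le0$ for all $n\ge1$; note $A_1(T)=T^*T-I$. For a positive operator $A$, $T$ is $A$-regular if $AT=A^{1/2}TA^{1/2}$. An operator $Q$ is quasinormal if $QQ^*Q=Q^*Q^2$. A contraction is completely non-isometric if there is no nonzero invariant subspace on which it acts isometrically. *)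

theory Defs
  imports "HOL-Analysis.Analysis"
begin

text \<open>HOL-Analysis only provides real inner product spaces. A complex Hilbert space
is modelled as a complete real normed vector space carrying a complex scalar
multiplication and a complex inner product (linear in the second argument,
conjugate-linear in the first) that induces the norm.\<close>

class chilbert = real_normed_vector + complete_space +
  fixes cscale :: "complex \<Rightarrow> 'a \<Rightarrow> 'a"
    and cinner :: "'a \<Rightarrow> 'a \<Rightarrow> complex"
  assumes cscale_add_right: "cscale a (x + y) = cscale a x + cscale a y"
    and cscale_add_left: "cscale (a + b) x = cscale a x + cscale b x"
    and cscale_cscale: "cscale a (cscale b x) = cscale (a * b) x"
    and cscale_one: "cscale 1 x = x"
    and scaleR_cscale: "scaleR r x = cscale (complex_of_real r) x"
    and cinner_add_left: "cinner (x + y) z = cinner x z + cinner y z"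
    and cinner_cscale_left: "cinner (cscale a x) y = cnj a * cinner x y"
    and cinner_commute: "cinner y x = cnj (cinner x y)"
    and cinner_self: "cinner x x = complex_of_real ((norm x)\<^sup>2)"

text \<open>Consistency check: the complex numbers form a complex Hilbert space.\<close>
instantiation complex :: chilbert
begin
definition cscale_complex :: "complex \<Rightarrow> complex \<Rightarrow> complex" where
  "cscale_complex a x = a * x"
definition cinner_complex :: "complex \<Rightarrow> complex \<Rightarrow> complex" where
  "cinner_complex x y = cnj x * y"
instance
proof
  fix a b :: complex and x y z :: complex and r :: real
  show "cscale a (x + y) = cscale a x + cscale a y"
    by (simp add: cscale_complex_def distrib_left)
  show "cscale (a + b) x = cscale a x + cscale b x"
    by (simp add: cscale_complex_def distrib_right)
  show "cscale a (cscale b x) = cscale (a * b) x"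
    by (simp add: cscale_complex_def mult.assoc)
  show "cscale 1 x = x"
    by (simp add: cscale_complex_def)
  show "r *\<^sub>R x = cscale (complex_of_real r) x"
    by (simp add: cscale_complex_def scaleR_conv_of_real)
  show "cinner (x + y) z = cinner x z + cinner y z"
    by (simp add: cinner_complex_def distrib_right)
  show "cinner (cscale a x) y = cnj a * cinner x y"
    by (simp add: cinner_complex_def cscale_complex_def mult.assoc)
  show "cinner y x = cnj (cinner x y)"
    by (simp add: cinner_complex_def mult.commute)
  show "cinner x x = complex_of_real ((norm x)\<^sup>2)"
    unfolding cinner_complex_def by (metis complex_norm_square mult.commute of_real_power)
qed
end

definition clinear_op :: "('a::chilbert \<Rightarrow> 'a) \<Rightarrow> bool" where
  "clinear_op T \<longleftrightarrow> (\<forall>x y. T (x + y) = T x + T y) \<and> (\<forall>a x. T (cscale a x) = cscale a (T x))"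

definition bounded_op :: "('a::chilbert \<Rightarrow> 'a) \<Rightarrow> bool" where
  "bounded_op T \<longleftrightarrow> clinear_op T \<and> (\<exists>K. \<forall>x. norm (T x) \<le> K * norm x)"

text \<open>Hilbert space adjoint T^* (unique; exists for bounded operators by Riesz).\<close>
definition adj :: "('a::chilbert \<Rightarrow> 'a) \<Rightarrow> ('a \<Rightarrow> 'a)" where
  "adj T = (SOME S. \<forall>x y. cinner (T x) y = cinner x (S y))"

definition positive_op :: "('a::chilbert \<Rightarrow> 'a) \<Rightarrow> bool" where
  "positive_op A \<longleftrightarrow> bounded_op A \<and> (\<forall>x. Im (cinner x (A x)) = 0 \<and> Re (cinner x (A x)) \<ge> 0)"

definition op_sqrt :: "('a::chilbert \<Rightarrow> 'a) \<Rightarrow> ('a \<Rightarrow> 'a)" where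
  "op_sqrt A = (THE S. positive_op S \<and> S \<circ> S = A)"

definition A_op :: "nat \<Rightarrow> ('a::chilbert \<Rightarrow> 'a) \<Rightarrow> ('a \<Rightarrow> 'a)" where
  "A_op n T = (\<lambda>x. - (\<Sum>k\<le>n. cscale ((-1) ^ k * of_nat (n choose k))
                              ((adj T ^^ k) ((T ^^ k) x))))"

text \<open>Completely hyperexpansive: \<open>\<Sum>_{k=0}^n (-1)^k (n choose k) T^{*k}T^k \<le> 0\<close> for all
  \<open>n \<ge> 1\<close>, i.e. \<open>A_n(T) \<ge> 0\<close>.\<close>
definition completely_hyperexpansive :: "('a::chilbert \<Rightarrow> 'a) \<Rightarrow> bool" where
  "completely_hyperexpansive T \<longleftrightarrow> (\<forall>n\<ge>1. positive_op (A_op n T))"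

definition regular :: "('a::chilbert \<Rightarrow> 'a) \<Rightarrow> ('a \<Rightarrow> 'a) \<Rightarrow> bool" where
  "regular A T \<longleftrightarrow> A \<circ> T = op_sqrt A \<circ> T \<circ> op_sqrt A"

definition csubspace :: "'a::chilbert set \<Rightarrow> bool" where
  "csubspace M \<longleftrightarrow> 0 \<in> M \<and> (\<forall>x\<in>M. \<forall>y\<in>M. x + y \<in> M) \<and> (\<forall>a. \<forall>x\<in>M. cscale a x \<in> M)"

definition proj :: "'a::chilbert set \<Rightarrow> 'a \<Rightarrow> 'a" where
  "proj M x = (THE p. p \<in> M \<and> (\<forall>m\<in>M. cinner m (x - p) = 0))"

text \<open>Compression \<open>P_M T|_M\<close> (considered as an operator on M).\<close>
definition compression :: "'a::chilbert set \<Rightarrow> ('a \<Rightarrow> 'a) \<Rightarrow> ('a \<Rightarrow> 'a)" where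
  "compression M T = (\<lambda>x. proj M (T x))"

text \<open>Adjoint of an operator C acting on the Hilbert space M (values outside M irrelevant).\<close>
definition adj_on :: "'a::chilbert set \<Rightarrow> ('a \<Rightarrow> 'a) \<Rightarrow> ('a \<Rightarrow> 'a)" where
  "adj_on M C = (SOME S. (\<forall>y\<in>M. S y \<in> M) \<and> (\<forall>x\<in>M. \<forall>y\<in>M. cinner (C x) y = cinner x (S y)))"

definition contraction_on :: "'a::chilbert set \<Rightarrow> ('a \<Rightarrow> 'a) \<Rightarrow> bool" where
  "contraction_on M C \<longleftrightarrow> (\<forall>x\<in>M. norm (C x) \<le> norm x)"

definition quasinormal_on :: "'a::chilbert set \<Rightarrow> ('a \<Rightarrow> 'a) \<Rightarrow> bool" where
  "quasinormal_on M Q \<longleftrightarrow> (\<forall>x\<in>M. Q (adj_on M Q (Q x)) = adj_on M Q (Q (Q x)))"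

definition completely_non_isometric_on :: "'a::chilbert set \<Rightarrow> ('a \<Rightarrow> 'a) \<Rightarrow> bool" where
  "completely_non_isometric_on M C \<longleftrightarrow>
     \<not> (\<exists>N. csubspace N \<and> closed N \<and> N \<subseteq> M \<and> N \<noteq> {0} \<and> C ` N \<subseteq> N
            \<and> (\<forall>x\<in>N. norm (C x) = norm x))"

end

theory Submission
  imports Defs "HOL-Computational_Algebra.Formal_Power_Series"
begin


instance chilbert \<subseteq> banach ..


lemma cinner_add_right: "cinner x (y + z) = cinner x y + cinner x z"
  by (metis cinner_add_left cinner_commute complex_cnj_add)

lemma cinner_cscale_right: "cinner x (cscale a y) = a * cinner x y"
  by (metis cinner_cscale_left cinner_commute complex_cnj_cnj complex_cnj_mult)

lemma cscale_zero_right[simp]: "cscale a 0 = 0"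
proof -
  have "cscale a 0 + cscale a 0 = cscale a 0 + 0" using cscale_add_right[of a 0 0] by simp
  thus ?thesis by (simp only: add_left_cancel)
qed

lemma cscale_zero_left[simp]: "cscale 0 x = 0"
proof -
  have "cscale 0 x + cscale 0 x = cscale 0 x + 0" using cscale_add_left[of 0 0 x] by simp
  thus ?thesis by (simp only: add_left_cancel)
qed

lemma cscale_minus_right: "cscale a (- x) = - cscale a x"
proof -
  have "cscale a (- x) + cscale a x = 0" by (simp flip: cscale_add_right)
  thus ?thesis by (simp add: add_eq_0_iff)
qed

lemma cscale_minus_left: "cscale (- a) x = - cscale a x"
proof -
  have "cscale (- a) x + cscale a x = 0" by (simp flip: cscale_add_left)
  thus ?thesis by (simp add: add_eq_0_iff)
qed

lemma cscale_diff_right: "cscale a (x - y) = cscale a x - cscale a y"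
  by (simp only: diff_conv_add_uminus cscale_add_right cscale_minus_right)

lemma cscale_diff_left: "cscale (a - b) x = cscale a x - cscale b x"
  proof -
  have "cscale (a - b) x = cscale (a + - b) x" by simp
  also have "\<dots> = cscale a x + - cscale b x" by (simp only: cscale_add_left cscale_minus_left)
  finally show ?thesis by (simp only: diff_conv_add_uminus)
qed

lemma cscale_of_real: "cscale (complex_of_real r) x = r *\<^sub>R x"
  by (simp add: scaleR_cscale)

lemma cscale_scaleR_comm: "cscale a (r *\<^sub>R x) = r *\<^sub>R cscale a x"
  by (simp add: scaleR_cscale cscale_cscale mult.commute)

lemma cinner_zero_left[simp]: "cinner 0 y = 0"
proof -
  have "cinner 0 y + cinner 0 y = cinner 0 y + 0" using cinner_add_left[of 0 0 y] by simp
  thus ?thesis by simp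
qed

lemma cinner_zero_right[simp]: "cinner x 0 = 0"
proof -
  have "cinner x 0 + cinner x 0 = cinner x 0 + 0" using cinner_add_right[of x 0 0] by simp
  thus ?thesis by simp
qed

lemma cinner_minus_left: "cinner (- x) y = - cinner x y"
proof -
  have "cinner (- x) y + cinner x y = 0" by (simp flip: cinner_add_left)
  thus ?thesis by (simp add: eq_neg_iff_add_eq_0)
qed

lemma cinner_minus_right: "cinner x (- y) = - cinner x y"
proof -
  have "cinner x (- y) + cinner x y = 0" by (simp flip: cinner_add_right)
  thus ?thesis by (simp add: eq_neg_iff_add_eq_0)
qed

lemma cinner_diff_left: "cinner (x - y) z = cinner x z - cinner y z"
  by (simp only: diff_conv_add_uminus cinner_add_left cinner_minus_left)

lemma cinner_diff_right: "cinner x (y - z) = cinner x y - cinner x z"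
  by (simp only: diff_conv_add_uminus cinner_add_right cinner_minus_right)

lemma cinner_scaleR_left: "cinner (r *\<^sub>R x) y = complex_of_real r * cinner x y"
  by (simp add: scaleR_cscale cinner_cscale_left)

lemma cinner_scaleR_right: "cinner x (r *\<^sub>R y) = complex_of_real r * cinner x y"
  by (simp add: scaleR_cscale cinner_cscale_right)

lemma cinner_sum_right: "cinner x (sum f A) = (\<Sum>i\<in>A. cinner x (f i))"
  by (induction A rule: infinite_finite_induct) (auto simp: cinner_add_right)

lemma cinner_sum_left: "cinner (sum f A) y = (\<Sum>i\<in>A. cinner (f i) y)"
  by (induction A rule: infinite_finite_induct) (auto simp: cinner_add_left)

lemma cscale_sum_right: "cscale a (sum f A) = (\<Sum>i\<in>A. cscale a (f i))"
  by (induction A rule: infinite_finite_induct) (auto simp: cscale_add_right)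

lemma Re_cinner_self: "Re (cinner x x) = (norm x)\<^sup>2"
  by (simp add: cinner_self)

lemma Im_cinner_self: "Im (cinner x x) = 0"
  by (simp add: cinner_self)

lemma cinner_self_eq_zero[simp]: "cinner x x = 0 \<longleftrightarrow> x = 0"
  by (simp add: cinner_self)

lemma cinner_eq_zero_all: "(\<And>y. cinner y x = 0) \<Longrightarrow> x = 0"
  using cinner_self_eq_zero by blast

lemma cinner_eq_zero_all': "(\<And>y. cinner x y = 0) \<Longrightarrow> x = 0"
  using cinner_self_eq_zero by blast

lemma cinner_ext: "(\<And>y. cinner y x = cinner y z) \<Longrightarrow> x = z"
proof -
  assume "\<And>y. cinner y x = cinner y z"
  hence "\<And>y. cinner y (x - z) = 0" by (simp add: cinner_diff_right)
  hence "x - z = 0" by (rule cinner_eq_zero_all)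
  thus "x = z" by simp
qed

lemma norm_cscale: "norm (cscale a x) = cmod a * norm x"
proof -
  have "complex_of_real ((norm (cscale a x))\<^sup>2) = cnj a * a * complex_of_real ((norm x)\<^sup>2)"
    by (metis cinner_cscale_left cinner_cscale_right cinner_self mult.assoc)
  also have "cnj a * a = complex_of_real ((cmod a)\<^sup>2)"
    by (metis complex_norm_square mult.commute)
  finally have "(norm (cscale a x))\<^sup>2 = ((cmod a) * norm x)\<^sup>2"
    by (metis of_real_eq_iff of_real_mult power_mult_distrib)
  thus ?thesis by (simp add: power2_eq_iff_nonneg)
qed

lemma norm_add_sq: "(norm (x + y))\<^sup>2 = (norm x)\<^sup>2 + (norm y)\<^sup>2 + 2 * Re (cinner x y)"
proof -
  have "cinner (x+y) (x+y) = cinner x x + cinner y y + (cinner x y + cnj (cinner x y))"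
    by (simp add: cinner_add_left cinner_add_right algebra_simps flip: cinner_commute)
  hence "Re (cinner (x+y) (x+y)) = Re (cinner x x) + Re (cinner y y) + 2 * Re (cinner x y)"
    by simp
  thus ?thesis by (simp add: Re_cinner_self)
qed

lemma pythagoras: "cinner x y = 0 \<Longrightarrow> (norm (x + y))\<^sup>2 = (norm x)\<^sup>2 + (norm y)\<^sup>2"
  by (simp add: norm_add_sq)

lemma cauchy_schwarz: "cmod (cinner x y) \<le> norm x * norm y"
proof (cases "x = 0")
  case True thus ?thesis by simp
next
  case False
  define t where "t = cinner x y / complex_of_real ((norm x)\<^sup>2)"
  define z where "z = y - cscale t x"
  have nx: "norm x \<noteq> 0" using False by simp
  have "cinner x z = cinner x y - t * cinner x x"
    by (simp add: z_def cinner_diff_right cinner_cscale_right)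
  also have "\<dots> = 0" using nx by (simp add: t_def cinner_self)
  finally have xz: "cinner x z = 0" .
  have "cinner (cscale t x) z = 0" by (simp add: cinner_cscale_left xz)
  hence "(norm y)\<^sup>2 = (norm (cscale t x))\<^sup>2 + (norm z)\<^sup>2"
    using pythagoras[of "cscale t x" z] by (simp add: z_def)
  hence "(norm (cscale t x))\<^sup>2 \<le> (norm y)\<^sup>2" by simp
  hence "(cmod t * norm x)\<^sup>2 \<le> (norm y)\<^sup>2" by (simp add: norm_cscale)
  hence "cmod t * norm x \<le> norm y"
    using power2_le_imp_le by fastforce
  moreover have "cmod t * norm x = cmod (cinner x y) / norm x"
    using nx by (simp add: t_def norm_divide power2_eq_square norm_mult)
  ultimately have "cmod (cinner x y) / norm x \<le> norm y" by simp
  thus ?thesis using nx by (simp add: divide_le_eq mult.commute)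
qed

lemma bounded_linear_cscale: "bounded_linear (cscale a)"
  apply (rule bounded_linear_intro[where K="cmod a"])
  by (auto simp: cscale_add_right cscale_scaleR_comm norm_cscale)

lemma bounded_linear_cinner_right: "bounded_linear (cinner x)"
  apply (rule bounded_linear_intro[where K="norm x"])
    apply (auto simp: cinner_add_right cinner_scaleR_right scaleR_conv_of_real)
  by (metis cauchy_schwarz mult.commute)

lemma bounded_linear_cinner_left: "bounded_linear (\<lambda>x. cinner x y)"
  apply (rule bounded_linear_intro[where K="norm y"])
    apply (auto simp: cinner_add_left cinner_scaleR_left scaleR_conv_of_real)
  by (metis cauchy_schwarz mult.commute cinner_commute complex_mod_cnj)






lemma csubspace_0: "csubspace M \<Longrightarrow> 0 \<in> M"
  by (simp add: csubspace_def)
lemma csubspace_add: "csubspace M \<Longrightarrow> x \<in> M \<Longrightarrow> y \<in> M \<Longrightarrow> x + y \<in> M"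
  by (simp add: csubspace_def)
lemma csubspace_cscale: "csubspace M \<Longrightarrow> x \<in> M \<Longrightarrow> cscale a x \<in> M"
  by (simp add: csubspace_def)
lemma csubspace_scaleR: "csubspace M \<Longrightarrow> x \<in> M \<Longrightarrow> r *\<^sub>R x \<in> M"
  by (simp add: csubspace_def scaleR_cscale)
lemma csubspace_minus: "csubspace M \<Longrightarrow> x \<in> M \<Longrightarrow> - x \<in> M"
  using csubspace_scaleR[of M x "-1"] by simp
lemma csubspace_diff: "csubspace M \<Longrightarrow> x \<in> M \<Longrightarrow> y \<in> M \<Longrightarrow> x - y \<in> M"
  using csubspace_add[of M x "-y"] csubspace_minus[of M y] by simp

lemma parallelogram:
  fixes u v :: "'a::chilbert"
  shows "(norm (u + v))\<^sup>2 + (norm (u - v))\<^sup>2 = 2 * (norm u)\<^sup>2 + 2 * (norm v)\<^sup>2"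
proof -
  have "(norm (u - v))\<^sup>2 = (norm u)\<^sup>2 + (norm v)\<^sup>2 + 2 * Re (cinner u (- v))"
    using norm_add_sq[of u "-v"] by simp
  thus ?thesis using norm_add_sq[of u v] by (simp add: cinner_minus_right)
qed

lemma proj_exists:
  fixes x :: "'a::chilbert"
  assumes M: "csubspace M" "closed M"
  shows "\<exists>p\<in>M. \<forall>m\<in>M. cinner m (x - p) = 0"
proof -
  define f where "f m = norm (x - m)" for m
  define d where "d = (INF m\<in>M. f m)"
  have ne: "M \<noteq> {}" using csubspace_0[OF M(1)] by auto
  have bdd: "bdd_below (f ` M)" by (rule bdd_belowI[of _ 0]) (auto simp: f_def)
  have dle: "d \<le> f m" if "m \<in> M" for m unfolding d_def using bdd that by (rule cINF_lower)
  have d0: "0 \<le> d" unfolding d_def using ne by (intro cINF_greatest) (auto simp: f_def)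
  have "\<exists>m\<in>M. f m < d + inverse (real (Suc n))" for n
  proof -
    have "d < d + inverse (real (Suc n))" by simp
    thus ?thesis unfolding d_def using cINF_less_iff[OF ne bdd] by blast
  qed
  then obtain s where s: "\<And>n. s n \<in> M" "\<And>n. f (s n) < d + inverse (real (Suc n))"
    by metis
  have mid: "(norm (s i - s j))\<^sup>2 \<le> 2 * (f (s i))\<^sup>2 + 2 * (f (s j))\<^sup>2 - 4 * d\<^sup>2" for i j
  proof -
    have "(1/2::real) *\<^sub>R (s i + s j) \<in> M"
      by (intro csubspace_scaleR csubspace_add M s)
    hence "d \<le> norm (x - (1/2::real) *\<^sub>R (s i + s j))" using dle f_def by simp
    hence "d * 2 \<le> norm (x - (1/2::real) *\<^sub>R (s i + s j)) * 2" by simp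
    also have "norm (x - (1/2::real) *\<^sub>R (s i + s j)) * 2 = norm ((x - s i) + (x - s j))"
    proof -
      have "(x - s i) + (x - s j) = 2 *\<^sub>R (x - (1/2::real) *\<^sub>R (s i + s j))"
        by (simp add: algebra_simps scaleR_2)
      thus ?thesis by simp
    qed
    finally have "(d * 2)\<^sup>2 \<le> (norm ((x - s i) + (x - s j)))\<^sup>2"
      using d0 by (intro power_mono) auto
    hence "4 * d\<^sup>2 \<le> (norm ((x - s i) + (x - s j)))\<^sup>2" by (simp add: power_mult_distrib)
    moreover have "(norm ((x - s i) + (x - s j)))\<^sup>2 + (norm ((x - s i) - (x - s j)))\<^sup>2
        = 2 * (f (s i))\<^sup>2 + 2 * (f (s j))\<^sup>2"
      unfolding f_def by (rule parallelogram)
    moreover have "(x - s i) - (x - s j) = s j - s i" by simp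
    ultimately show ?thesis by (simp add: norm_minus_commute)
  qed
  have "Cauchy s"
  proof (rule CauchyI)
    fix e :: real assume e: "0 < e"
    obtain N where N: "inverse (real (Suc N)) < e\<^sup>2 / (4 * (2 * d + 1))"
      using reals_Archimedean e d0 by (metis divide_pos_pos mult_pos_pos zero_less_numeral
          zero_less_power add_nonneg_pos mult_nonneg_nonneg zero_le_numeral zero_less_one)
    show "\<exists>M. \<forall>m\<ge>M. \<forall>n\<ge>M. norm (s m - s n) < e"
    proof (intro exI allI impI)
      fix i j assume ij: "N \<le> i" "N \<le> j"
      define h where "h = inverse (real (Suc N))"
      have h0: "0 < h" "h \<le> 1" by (auto simp: h_def inverse_le_1_iff)
      have hi: "inverse (real (Suc i)) \<le> h" "inverse (real (Suc j)) \<le> h"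
        using ij by (auto simp: h_def intro!: le_imp_inverse_le)
      have fi: "(f (s i))\<^sup>2 \<le> (d + h)\<^sup>2"
        using s(2)[of i] hi(1) by (intro power_mono) (auto simp: f_def)
      have fj: "(f (s j))\<^sup>2 \<le> (d + h)\<^sup>2"
        using s(2)[of j] hi(2) by (intro power_mono) (auto simp: f_def)
      have "(norm (s i - s j))\<^sup>2 \<le> 4 * ((d + h)\<^sup>2 - d\<^sup>2)"
        using mid[of i j] fi fj by simp
      also have "\<dots> = 4 * h * (2 * d + h)" by (simp add: power2_eq_square algebra_simps)
      also have "\<dots> \<le> 4 * h * (2 * d + 1)" using h0 d0 by simp
      also have "\<dots> < e\<^sup>2" using N d0 unfolding h_def[symmetric]
        by (simp add: field_simps)
      finally have "(norm (s i - s j))\<^sup>2 < e\<^sup>2" .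
      thus "norm (s i - s j) < e" using e by (simp add: power_less_imp_less_base)
    qed
  qed
  then obtain p where p: "s \<longlonglongrightarrow> p" using Cauchy_convergent_iff convergent_def by blast
  have pM: "p \<in> M" using closed_sequentially[OF M(2)] s(1) p by blast
  have t1: "(\<lambda>n. f (s n)) \<longlonglongrightarrow> norm (x - p)"
    unfolding f_def by (intro tendsto_intros p)
  have t2: "(\<lambda>n. f (s n)) \<longlonglongrightarrow> d"
  proof (rule real_tendsto_sandwich[of "\<lambda>n. d" _ _ "\<lambda>n. d + inverse (real (Suc n))"])
    show "\<forall>\<^sub>F n in sequentially. d \<le> f (s n)" using dle s(1) by (intro always_eventually allI) auto
    show "\<forall>\<^sub>F n in sequentially. f (s n) \<le> d + inverse (real (Suc n))" using s(2) by (intro always_eventually allI less_imp_le) auto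
    show "(\<lambda>n. d) \<longlonglongrightarrow> d" by simp
    show "(\<lambda>n. d + inverse (real (Suc n))) \<longlonglongrightarrow> d"
      using tendsto_add[OF tendsto_const LIMSEQ_inverse_real_of_nat, of d] by simp
  qed
  have fp: "norm (x - p) = d" using t1 t2 LIMSEQ_unique by blast
  have orth: "cinner m (x - p) = 0" if m: "m \<in> M" for m
  proof (rule ccontr)
    assume c0: "cinner m (x - p) \<noteq> 0"
    hence m0: "m \<noteq> 0" by auto
    define w where "w = x - p"
    define c where "c = cinner m w"
    define t where "t = c / complex_of_real ((norm m)\<^sup>2)"
    have nm: "norm m \<noteq> 0" using m0 by simp
    have "p + cscale t m \<in> M" by (intro csubspace_add csubspace_cscale M pM m)
    hence "d \<le> norm (x - (p + cscale t m))" using dle f_def by simp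
    hence "(norm w)\<^sup>2 \<le> (norm (w + - cscale t m))\<^sup>2"
      using fp d0 by (simp add: w_def algebra_simps power_mono)
    also have "\<dots> = (norm w)\<^sup>2 + (cmod t * norm m)\<^sup>2 + 2 * Re (cinner w (- cscale t m))"
      using norm_add_sq[of w "- cscale t m"] by (simp add: norm_cscale)
    also have "cinner w (- cscale t m) = - (t * cnj c)"
      by (simp add: cinner_minus_right cinner_cscale_right c_def cinner_commute[of m w])
    also have "t * cnj c = complex_of_real ((cmod c)\<^sup>2 / (norm m)\<^sup>2)"
      by (simp add: t_def complex_norm_square[symmetric])
    also have "(cmod t * norm m)\<^sup>2 = (cmod c)\<^sup>2 / (norm m)\<^sup>2"
      using nm by (simp add: t_def norm_divide power2_eq_square norm_mult)
    finally have "0 \<le> - (cmod c)\<^sup>2 / (norm m)\<^sup>2" by simp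
    hence "(cmod c)\<^sup>2 \<le> 0" using nm by (simp add: divide_le_0_iff)
    hence "c = 0" by simp
    thus False using c0 by (simp add: c_def w_def)
  qed
  show ?thesis using pM orth by blast
qed

lemma proj_unique:
  fixes x :: "'a::chilbert"
  assumes M: "csubspace M"
    and p: "p \<in> M" "\<forall>m\<in>M. cinner m (x - p) = 0"
    and q: "q \<in> M" "\<forall>m\<in>M. cinner m (x - q) = 0"
  shows "p = q"
proof -
  have pq: "p - q \<in> M" using M p q csubspace_diff by blast
  have "cinner (p - q) ((x - q) - (x - p)) = 0"
    using p(2) q(2) pq by (simp add: cinner_diff_right)
  hence "cinner (p - q) (p - q) = 0" by simp
  thus ?thesis by simp
qed

locale closed_subspace =
  fixes M :: "'a::chilbert set"
  assumes sub: "csubspace M" and clo: "closed M"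
begin

lemma proj_prop: "proj M x \<in> M \<and> (\<forall>m\<in>M. cinner m (x - proj M x) = 0)"
proof -
  have "\<exists>!p. p \<in> M \<and> (\<forall>m\<in>M. cinner m (x - p) = 0)"
    using proj_exists[OF sub clo, of x] proj_unique[OF sub] by blast
  thus ?thesis unfolding proj_def by (rule theI')
qed

lemma proj_in: "proj M x \<in> M" using proj_prop by blast
lemma proj_orth: "m \<in> M \<Longrightarrow> cinner m (x - proj M x) = 0" using proj_prop by blast

lemma proj_eqI: "p \<in> M \<Longrightarrow> (\<And>m. m \<in> M \<Longrightarrow> cinner m (x - p) = 0) \<Longrightarrow> proj M x = p"
  using proj_unique[OF sub] proj_prop by blast

lemma proj_id: "x \<in> M \<Longrightarrow> proj M x = x"
  by (rule proj_eqI) auto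

lemma proj_inner_M: "m \<in> M \<Longrightarrow> cinner m (proj M x) = cinner m x"
  using proj_orth[of m x] by (simp add: cinner_diff_right)

lemma proj_inner_M': "m \<in> M \<Longrightarrow> cinner (proj M x) m = cinner x m"
  using proj_inner_M[of m x] by (metis cinner_commute)

lemma proj_selfadj: "cinner (proj M x) y = cinner x (proj M y)"
  by (metis proj_in proj_inner_M proj_inner_M')

lemma proj_zero: "(\<And>m. m \<in> M \<Longrightarrow> cinner m x = 0) \<Longrightarrow> proj M x = 0"
  by (rule proj_eqI) (auto simp: csubspace_0[OF sub])

lemma proj_add: "proj M (x + y) = proj M x + proj M y"
  by (rule proj_eqI) (auto intro!: csubspace_add[OF sub] proj_in
      simp: cinner_diff_right cinner_add_right proj_inner_M)

lemma proj_cscale: "proj M (cscale a x) = cscale a (proj M x)"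
  by (rule proj_eqI) (auto intro!: csubspace_cscale[OF sub] proj_in
      simp: cinner_diff_right cinner_cscale_right proj_inner_M)

lemma proj_minus: "proj M (- x) = - proj M x"
  by (rule proj_eqI) (auto intro!: csubspace_minus[OF sub] proj_in
      simp: cinner_diff_right cinner_minus_right proj_inner_M)

lemma proj_diff: "proj M (x - y) = proj M x - proj M y"
  using proj_add[of x "-y"] proj_minus[of y] by simp

lemma proj_scaleR: "proj M (r *\<^sub>R x) = r *\<^sub>R proj M x"
  by (simp add: scaleR_cscale proj_cscale)

lemma norm_proj_le: "norm (proj M x) \<le> norm x"
proof -
  have "cinner (proj M x) (x - proj M x) = 0" by (rule proj_orth[OF proj_in])
  hence "(norm x)\<^sup>2 = (norm (proj M x))\<^sup>2 + (norm (x - proj M x))\<^sup>2"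
    using pythagoras[of "proj M x" "x - proj M x"] by simp
  hence "(norm (proj M x))\<^sup>2 \<le> (norm x)\<^sup>2" by simp
  thus ?thesis using power2_le_imp_le by fastforce
qed

lemma bounded_linear_proj: "bounded_linear (proj M)"
  by (rule bounded_linear_intro[where K=1]) (auto simp: proj_add proj_scaleR norm_proj_le)

lemma proj_idem: "proj M (proj M x) = proj M x"
  by (rule proj_id[OF proj_in])

lemma proj_orth_zero: "(\<And>m. m \<in> M \<Longrightarrow> cinner m x = 0) \<Longrightarrow> proj M x = 0"
  by (rule proj_zero)

end

lemma closure_csubspace:
  fixes S :: "'a::chilbert set"
  assumes S: "csubspace S"
  shows "csubspace (closure S)"
  unfolding csubspace_def
proof (intro conjI ballI allI)
  show "0 \<in> closure S" using csubspace_0[OF S] closure_subset by blast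
next
  fix x y assume "x \<in> closure S" "y \<in> closure S"
  then obtain f g where f: "\<And>n. f n \<in> S" "f \<longlonglongrightarrow> x" and g: "\<And>n. g n \<in> S" "g \<longlonglongrightarrow> y"
    unfolding closure_sequential by blast
  have "(\<lambda>n. f n + g n) \<longlonglongrightarrow> x + y" using f g by (intro tendsto_add)
  moreover have "\<And>n. f n + g n \<in> S" using f g csubspace_add[OF S] by blast
  ultimately show "x + y \<in> closure S" unfolding closure_sequential
    by (intro exI[where x="\<lambda>n. f n + g n"]) auto
next
  fix a x assume "x \<in> closure S"
  then obtain f where f: "\<And>n. f n \<in> S" "f \<longlonglongrightarrow> x"
    unfolding closure_sequential by blast
  have "(\<lambda>n. cscale a (f n)) \<longlonglongrightarrow> cscale a x"
    using bounded_linear.tendsto[OF bounded_linear_cscale f(2)] .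
  moreover have "\<And>n. cscale a (f n) \<in> S" using f csubspace_cscale[OF S] by blast
  ultimately show "cscale a x \<in> closure S" unfolding closure_sequential
    by (intro exI[where x="\<lambda>n. cscale a (f n)"]) auto
qed



section \<open>Bounded operators\<close>

lemma clinear_add: "clinear_op T \<Longrightarrow> T (x + y) = T x + T y"
  by (simp add: clinear_op_def)
lemma clinear_cscale: "clinear_op T \<Longrightarrow> T (cscale a x) = cscale a (T x)"
  by (simp add: clinear_op_def)
lemma clinear_scaleR: "clinear_op T \<Longrightarrow> T (r *\<^sub>R x) = r *\<^sub>R (T x)"
  by (simp add: clinear_op_def scaleR_cscale)
lemma clinear_zero: "clinear_op T \<Longrightarrow> T 0 = 0"
  using clinear_scaleR[of T 0 0] by simp
lemma clinear_minus: "clinear_op T \<Longrightarrow> T (- x) = - T x"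
  using clinear_scaleR[of T "-1" x] by simp
lemma clinear_diff: "clinear_op T \<Longrightarrow> T (x - y) = T x - T y"
  using clinear_add[of T x "-y"] clinear_minus[of T y] by simp
lemma clinear_sum: "clinear_op T \<Longrightarrow> T (sum f A) = (\<Sum>i\<in>A. T (f i))"
  by (induction A rule: infinite_finite_induct) (auto simp: clinear_zero clinear_add)

lemma bounded_op_clinear: "bounded_op T \<Longrightarrow> clinear_op T"
  by (simp add: bounded_op_def)

lemma bounded_op_bound: "bounded_op T \<Longrightarrow> \<exists>K>0. \<forall>x. norm (T x) \<le> K * norm x"
proof -
  assume "bounded_op T"
  then obtain K where K: "\<And>x. norm (T x) \<le> K * norm x" by (auto simp: bounded_op_def)
  have "norm (T x) \<le> (max K 1) * norm x" for x
    using K[of x] by (meson max.cobounded1 mult_right_mono norm_ge_zero order.trans)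
  thus ?thesis by (intro exI[of _ "max K 1"]) auto
qed

lemma bounded_op_bounded_linear: "bounded_op T \<Longrightarrow> bounded_linear T"
proof -
  assume T: "bounded_op T"
  then obtain K where K: "\<And>x. norm (T x) \<le> K * norm x" by (auto simp: bounded_op_def)
  show ?thesis
    apply (rule bounded_linear_intro[where K=K])
    using bounded_op_clinear[OF T] apply (simp add: clinear_add)
    using bounded_op_clinear[OF T] apply (simp add: clinear_scaleR)
    using K by (simp add: mult.commute)
qed

lemma bounded_opI: "clinear_op T \<Longrightarrow> (\<And>x. norm (T x) \<le> K * norm x) \<Longrightarrow> bounded_op T"
  by (auto simp: bounded_op_def)

lemma clinear_opI: "(\<And>x y. T (x + y) = T x + T y) \<Longrightarrow> (\<And>a x. T (cscale a x) = cscale a (T x)) \<Longrightarrow> clinear_op T"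
  by (auto simp: clinear_op_def)

lemma bounded_op_comp: "bounded_op S \<Longrightarrow> bounded_op T \<Longrightarrow> bounded_op (S \<circ> T)"
proof -
  assume S: "bounded_op S" and T: "bounded_op T"
  obtain K where K: "K > 0" "\<And>x. norm (S x) \<le> K * norm x" using bounded_op_bound[OF S] by auto
  obtain L where L: "L > 0" "\<And>x. norm (T x) \<le> L * norm x" using bounded_op_bound[OF T] by auto
  show ?thesis
  proof (rule bounded_opI[where K="K * L"])
    show "clinear_op (S \<circ> T)"
      using S T by (auto simp: clinear_op_def bounded_op_def)
    fix x
    have "norm ((S \<circ> T) x) \<le> K * norm (T x)" using K by simp
    also have "\<dots> \<le> K * (L * norm x)" using K L by (intro mult_left_mono) auto
    finally show "norm ((S \<circ> T) x) \<le> K * L * norm x" by (simp add: mult.assoc)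
  qed
qed

lemma bounded_op_id: "bounded_op id"
  by (rule bounded_opI[where K=1]) (auto simp: clinear_op_def)

lemma bounded_op_ident: "bounded_op (\<lambda>x. x)"
  using bounded_op_id by (simp add: id_def)

lemma bounded_op_funpow: "bounded_op T \<Longrightarrow> bounded_op (T ^^ n)"
  by (induction n) (auto simp: bounded_op_id bounded_op_comp)

lemma bounded_op_add: "bounded_op S \<Longrightarrow> bounded_op T \<Longrightarrow> bounded_op (\<lambda>x. S x + T x)"
proof -
  assume S: "bounded_op S" and T: "bounded_op T"
  obtain K where K: "K > 0" "\<And>x. norm (S x) \<le> K * norm x" using bounded_op_bound[OF S] by auto
  obtain L where L: "L > 0" "\<And>x. norm (T x) \<le> L * norm x" using bounded_op_bound[OF T] by auto
  show ?thesis
  proof (rule bounded_opI[where K="K + L"])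
    show "clinear_op (\<lambda>x. S x + T x)"
      using S T by (auto simp: clinear_op_def bounded_op_def cscale_add_right)
    fix x show "norm (S x + T x) \<le> (K + L) * norm x"
      using norm_triangle_ineq[of "S x" "T x"] K(2)[of x] L(2)[of x] by (simp add: algebra_simps)
  qed
qed

lemma bounded_op_cscale: "bounded_op T \<Longrightarrow> bounded_op (\<lambda>x. cscale a (T x))"
proof -
  assume T: "bounded_op T"
  obtain L where L: "L > 0" "\<And>x. norm (T x) \<le> L * norm x" using bounded_op_bound[OF T] by auto
  show ?thesis
  proof (rule bounded_opI[where K="cmod a * L"])
    show "clinear_op (\<lambda>x. cscale a (T x))"
      using T by (auto simp: clinear_op_def bounded_op_def cscale_add_right cscale_cscale mult.commute)
    fix x show "norm (cscale a (T x)) \<le> cmod a * L * norm x"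
      using L(2)[of x] by (simp add: norm_cscale mult.assoc mult_left_mono)
  qed
qed

lemma bounded_op_minus: "bounded_op T \<Longrightarrow> bounded_op (\<lambda>x. - T x)"
  using bounded_op_cscale[of T "-1"] by (simp add: cscale_minus_left cscale_one)

lemma bounded_op_diff: "bounded_op S \<Longrightarrow> bounded_op T \<Longrightarrow> bounded_op (\<lambda>x. S x - T x)"
  using bounded_op_add[of S "\<lambda>x. - T x"] bounded_op_minus[of T] by simp

lemma bounded_op_proj: "closed_subspace M \<Longrightarrow> bounded_op (proj M)"
  by (rule bounded_opI[where K=1])
     (auto simp: clinear_op_def closed_subspace.proj_add closed_subspace.proj_cscale
        closed_subspace.norm_proj_le)

section \<open>Riesz and adjoints\<close>

lemma riesz:
  fixes f :: "'a::chilbert \<Rightarrow> complex"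
  assumes add: "\<And>x y. f (x + y) = f x + f y"
    and sc: "\<And>a x. f (cscale a x) = a * f x"
    and bd: "\<And>x. cmod (f x) \<le> K * norm x"
  shows "\<exists>z. \<forall>x. f x = cinner z x"
proof (cases "\<forall>x. f x = 0")
  case True thus ?thesis by (intro exI[of _ 0]) simp
next
  case False
  then obtain x0 where x0: "f x0 \<noteq> 0" by auto
  have bl: "bounded_linear f"
  proof (rule bounded_linear_intro[where K=K])
    show "f (x + y) = f x + f y" for x y by (rule add)
    show "f (r *\<^sub>R x) = r *\<^sub>R f x" for r x
    proof -
      have "f (r *\<^sub>R x) = f (cscale (complex_of_real r) x)" by (simp only: scaleR_cscale)
      also have "\<dots> = r *\<^sub>R f x" by (simp only: sc scaleR_conv_of_real)
      finally show ?thesis .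
    qed
    show "norm (f x) \<le> norm x * K" for x using bd[of x] by (simp add: mult.commute)
  qed
  define N where "N = {x. f x = 0}"
  have Nsub: "csubspace N" unfolding N_def csubspace_def
  proof -
    have "f 0 = 0" using add[of 0 0] by simp
    thus "0 \<in> {x. f x = 0} \<and> (\<forall>x\<in>{x. f x = 0}. \<forall>y\<in>{x. f x = 0}. x + y \<in> {x. f x = 0}) \<and>
      (\<forall>a. \<forall>x\<in>{x. f x = 0}. cscale a x \<in> {x. f x = 0})" using add sc by auto
  qed
  have Ncl: "closed N" unfolding N_def
    using bounded_linear.continuous_on[OF bl continuous_on_id]
    by (intro closed_Collect_eq) (auto intro: continuous_intros)
  interpret N: closed_subspace N using Nsub Ncl by unfold_locales
  define w where "w = x0 - proj N x0"
  have w0: "w \<noteq> 0"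
  proof
    assume "w = 0"
    hence "x0 \<in> N" using N.proj_in[of x0] by (simp add: w_def)
    thus False using x0 by (simp add: N_def)
  qed
  have worth: "cinner m w = 0" if "m \<in> N" for m using N.proj_orth[OF that] by (simp add: w_def)
  define z where "z = cscale (cnj (f w) / complex_of_real ((norm w)\<^sup>2)) w"
  have "f x = cinner z x" for x
  proof -
    define v where "v = cscale (f x) w - cscale (f w) x"
    have "v = cscale (f x) w + cscale (- f w) x" by (simp add: v_def cscale_minus_left)
    hence "f v = f x * f w + (- f w) * f x" by (simp add: add sc)
    hence "f v = 0" by simp
    hence "v \<in> N" by (simp add: N_def)
    hence "cinner v w = 0" by (rule worth)
    hence "cinner w v = 0" by (metis cinner_commute complex_cnj_zero)
    hence "f x * cinner w w - f w * cinner w x = 0"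
      by (simp add: v_def cinner_diff_right cinner_cscale_right)
    hence "f x = f w * cinner w x / complex_of_real ((norm w)\<^sup>2)"
      using w0 by (simp add: cinner_self field_simps)
    thus ?thesis by (simp add: z_def cinner_cscale_left)
  qed
  thus ?thesis by blast
qed

definition is_adj :: "('a::chilbert \<Rightarrow> 'a) \<Rightarrow> ('a \<Rightarrow> 'a) \<Rightarrow> bool" where
  "is_adj T S \<longleftrightarrow> (\<forall>x y. cinner (T x) y = cinner x (S y))"

lemma adj_exists: "bounded_op T \<Longrightarrow> \<exists>S. is_adj T S"
proof -
  assume T: "bounded_op T"
  obtain K where K: "K > 0" "\<And>x. norm (T x) \<le> K * norm x" using bounded_op_bound[OF T] by auto
  have "\<exists>z. \<forall>x. cinner y (T x) = cinner z x" for y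
  proof (rule riesz[where K="norm y * K"])
    show "cinner y (T (x1 + x2)) = cinner y (T x1) + cinner y (T x2)" for x1 x2
      using T by (simp add: bounded_op_clinear clinear_add cinner_add_right)
    show "cinner y (T (cscale a x)) = a * cinner y (T x)" for a x
      using T by (simp add: bounded_op_clinear clinear_cscale cinner_cscale_right)
    show "cmod (cinner y (T x)) \<le> norm y * K * norm x" for x
      using cauchy_schwarz[of y "T x"] K(2)[of x]
      by (metis mult.assoc mult_left_mono norm_ge_zero order_trans)
  qed
  then obtain S where S: "\<And>y x. cinner y (T x) = cinner (S y) x" by metis
  have "cinner (T x) y = cinner x (S y)" for x y
    by (metis S cinner_commute)
  thus ?thesis unfolding is_adj_def by blast
qed

lemma adj_is_adj: assumes "bounded_op T" shows "is_adj T (adj T)"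
proof -
  obtain S where "is_adj T S" using adj_exists[OF assms] by blast
  hence "\<forall>x y. cinner (T x) y = cinner x (S y)" by (simp add: is_adj_def)
  hence "\<forall>x y. cinner (T x) y = cinner x (adj T y)" unfolding adj_def
    by (rule someI[where P="\<lambda>S. \<forall>x y. cinner (T x) y = cinner x (S y)"])
  thus ?thesis by (simp add: is_adj_def)
qed

lemma adj1: "bounded_op T \<Longrightarrow> cinner (T x) y = cinner x (adj T y)"
  using adj_is_adj unfolding is_adj_def by blast

lemma adj2: "bounded_op T \<Longrightarrow> cinner (adj T y) x = cinner y (T x)"
  by (metis adj1 cinner_commute)

lemma adj_add: "bounded_op T \<Longrightarrow> adj T (x + y) = adj T x + adj T y"
  by (rule cinner_ext) (simp add: adj1[symmetric] cinner_add_right)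

lemma adj_cscale: "bounded_op T \<Longrightarrow> adj T (cscale a x) = cscale a (adj T x)"
  by (rule cinner_ext) (simp add: adj1[symmetric] cinner_cscale_right)

lemma adj_clinear: "bounded_op T \<Longrightarrow> clinear_op (adj T)"
  by (simp add: clinear_op_def adj_add adj_cscale)

lemma adj_bounded: "bounded_op T \<Longrightarrow> bounded_op (adj T)"
proof -
  assume T: "bounded_op T"
  obtain K where K: "K > 0" "\<And>x. norm (T x) \<le> K * norm x" using bounded_op_bound[OF T] by auto
  show ?thesis
  proof (rule bounded_opI[where K=K])
    show "clinear_op (adj T)" using T by (rule adj_clinear)
    fix y
    have "(norm (adj T y))\<^sup>2 = Re (cinner (adj T y) (adj T y))" by (simp add: Re_cinner_self)
    also have "\<dots> = Re (cinner (T (adj T y)) y)" by (simp add: adj1[OF T])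
    also have "\<dots> \<le> cmod (cinner (T (adj T y)) y)" by (rule complex_Re_le_cmod)
    also have "\<dots> \<le> norm (T (adj T y)) * norm y" by (rule cauchy_schwarz)
    also have "\<dots> \<le> K * norm (adj T y) * norm y" using K by (intro mult_right_mono) auto
    finally have "norm (adj T y) * norm (adj T y) \<le> norm (adj T y) * (K * norm y)"
      by (simp add: power2_eq_square algebra_simps)
    thus "norm (adj T y) \<le> K * norm y"
      using K(1) by (cases "adj T y = 0") (auto simp: mult_le_cancel_left_pos)
  qed
qed

lemma adj_unique: "bounded_op T \<Longrightarrow> (\<And>x y. cinner (T x) y = cinner x (S y)) \<Longrightarrow> adj T y = S y"
  by (rule cinner_ext) (metis adj1)

lemma adj_adj: "bounded_op T \<Longrightarrow> adj (adj T) x = T x"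
proof -
  assume T: "bounded_op T"
  have "adj (adj T) x = T x"
    by (rule adj_unique[OF adj_bounded[OF T]]) (simp add: adj2[OF T])
  thus ?thesis .
qed

lemma adj_funpow_bounded: "bounded_op T \<Longrightarrow> bounded_op (adj T ^^ n)"
  by (intro bounded_op_funpow adj_bounded)

lemma A_op_Suc:
  fixes T :: "'a::chilbert \<Rightarrow> 'a"
  assumes T: "bounded_op T"
  shows "A_op (Suc n) T x = A_op n T x - adj T (A_op n T (T x))"
proof -
  define X where "X k = (adj T ^^ k) ((T ^^ k) x)" for k
  define cf where "cf m k = ((-1) ^ k * of_nat (m choose k) :: complex)" for m k
  define B where "B m y = (\<Sum>k\<le>m. cscale (cf m k) ((adj T ^^ k) ((T ^^ k) y)))" for m y
  have AB: "A_op m T y = - B m y" for m y by (simp add: A_op_def B_def cf_def)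
  have Bx: "B m x = (\<Sum>k\<le>m. cscale (cf m k) (X k))" for m by (simp add: B_def X_def)
  have lin: "clinear_op (adj T)" using adj_clinear[OF T] .
  have XS: "adj T ((adj T ^^ k) ((T ^^ k) (T x))) = X (Suc k)" for k
    by (simp only: X_def funpow.simps(2)[of k "adj T"] funpow_Suc_right[of k T] comp_apply)
  have adjB: "adj T (B n (T x)) = (\<Sum>k\<le>n. cscale (cf n k) (X (Suc k)))"
    unfolding B_def by (simp add: clinear_sum[OF lin] clinear_cscale[OF lin] XS)
  have c0: "cf m 0 = 1" for m by (simp add: cf_def)
  have cS: "cf (Suc n) (Suc k) = cf n (Suc k) - cf n k" for k
    by (simp add: cf_def algebra_simps)
  have last: "cf n (Suc n) = 0" by (simp add: cf_def)
  have "B (Suc n) x = cscale (cf (Suc n) 0) (X 0) + (\<Sum>k\<le>n. cscale (cf (Suc n) (Suc k)) (X (Suc k)))"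
    unfolding Bx by (simp add: sum.atMost_Suc_shift del: sum.atMost_Suc)
  also have "(\<Sum>k\<le>n. cscale (cf (Suc n) (Suc k)) (X (Suc k)))
      = (\<Sum>k\<le>n. cscale (cf n (Suc k)) (X (Suc k))) - (\<Sum>k\<le>n. cscale (cf n k) (X (Suc k)))"
    by (simp add: cS cscale_diff_left sum_subtractf)
  also have "(\<Sum>k\<le>n. cscale (cf n (Suc k)) (X (Suc k))) = B n x - cscale (cf n 0) (X 0)"
  proof -
    have "B n x = (\<Sum>k\<le>Suc n. cscale (cf n k) (X k))"
      unfolding Bx by (simp add: last)
    also have "\<dots> = cscale (cf n 0) (X 0) + (\<Sum>k\<le>n. cscale (cf n (Suc k)) (X (Suc k)))"
      by (simp add: sum.atMost_Suc_shift del: sum.atMost_Suc)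
    finally show ?thesis by simp
  qed
  finally have "B (Suc n) x = B n x - adj T (B n (T x))"
    by (simp add: c0 adjB)
  thus ?thesis by (simp add: AB clinear_minus[OF lin])
qed



section \<open>Positive operators\<close>

lemma positive_bounded: "positive_op A \<Longrightarrow> bounded_op A"
  by (simp add: positive_op_def)
lemma positive_Im: "positive_op A \<Longrightarrow> Im (cinner x (A x)) = 0"
  by (simp add: positive_op_def)
lemma positive_Re: "positive_op A \<Longrightarrow> Re (cinner x (A x)) \<ge> 0"
  by (simp add: positive_op_def)

lemma positive_real: "positive_op A \<Longrightarrow> cinner x (A x) = complex_of_real (Re (cinner x (A x)))"
  by (simp add: positive_Im complex_eq_iff)

lemma positive_selfadj:
  assumes A: "positive_op A"
  shows "cinner (A x) y = cinner x (A y)"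
proof -
  have L: "clinear_op A" using A by (simp add: positive_op_def bounded_op_def)
  define a where "a = cinner x (A y)"
  define b where "b = cinner y (A x)"
  have "Im (cinner (x + y) (A (x + y))) = 0" using A by (rule positive_Im)
  hence "Im (cinner x (A x) + cinner y (A y) + a + b) = 0"
    by (simp add: clinear_add[OF L] cinner_add_left cinner_add_right a_def b_def algebra_simps)
  hence 1: "Im a + Im b = 0" using positive_Im[OF A, of x] positive_Im[OF A, of y] by simp
  have "Im (cinner (cscale \<i> x + y) (A (cscale \<i> x + y))) = 0" using A by (rule positive_Im)
  hence "Im (cinner x (A x) + cinner y (A y) + (- \<i>) * a + \<i> * b) = 0"
    by (simp add: clinear_add[OF L] clinear_cscale[OF L] cinner_add_left cinner_add_right
        cinner_cscale_left cinner_cscale_right a_def b_def algebra_simps)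
  hence 2: "Re b - Re a = 0" using positive_Im[OF A, of x] positive_Im[OF A, of y] by simp
  have "b = cnj a" using 1 2 by (simp add: complex_eq_iff)
  hence "cinner y (A x) = cnj (cinner x (A y))" by (simp add: a_def b_def)
  thus ?thesis by (metis cinner_commute complex_cnj_cnj)
qed

lemma positive_adj: "positive_op A \<Longrightarrow> adj A y = A y"
  by (rule adj_unique[OF positive_bounded]) (auto simp: positive_selfadj)

lemma positive_CS_Re:
  assumes A: "positive_op A"
  shows "(Re (cinner x (A y)))\<^sup>2 \<le> Re (cinner x (A x)) * Re (cinner y (A y))"
proof -
  have L: "clinear_op A" using A by (simp add: positive_op_def bounded_op_def)
  define p where "p = Re (cinner x (A x))"
  define q where "q = Re (cinner y (A y))"
  define r where "r = Re (cinner x (A y))"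
  have sym: "Re (cinner y (A x)) = r"
  proof -
    have "cinner y (A x) = cnj (cinner (A x) y)" by (rule cinner_commute)
    also have "\<dots> = cnj (cinner x (A y))" by (simp add: positive_selfadj[OF A])
    finally show ?thesis by (simp add: r_def)
  qed
  have quad: "0 \<le> p + 2 * t * r + t\<^sup>2 * q" for t :: real
  proof -
    have "0 \<le> Re (cinner (x + t *\<^sub>R y) (A (x + t *\<^sub>R y)))" by (rule positive_Re[OF A])
    also have "\<dots> = p + 2 * t * r + t\<^sup>2 * q"
      using sym by (simp add: clinear_add[OF L] clinear_scaleR[OF L] cinner_add_left cinner_add_right
          cinner_scaleR_left cinner_scaleR_right p_def q_def r_def power2_eq_square algebra_simps)
    finally show ?thesis .
  qed
  have p0: "0 \<le> p" using quad[of 0] by simp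
  show ?thesis
  proof (cases "q = 0")
    case True
    have "r = 0"
    proof (rule ccontr)
      assume "r \<noteq> 0"
      have "0 \<le> p + 2 * (- (p + 1) / (2 * r)) * r" using quad[of "- (p + 1) / (2 * r)"] True by simp
      also have "\<dots> = -1" using \<open>r \<noteq> 0\<close> by (simp add: field_simps)
      finally show False by simp
    qed
    thus ?thesis using True by (simp add: p_def q_def r_def)
  next
    case False
    have q0: "0 < q" using quad[of 1] quad[of "-1"] False positive_Re[OF A, of y] q_def by auto
    have "0 \<le> p + 2 * (- r / q) * r + (- r / q)\<^sup>2 * q" by (rule quad)
    also have "\<dots> = p - r\<^sup>2 / q" using q0 by (simp add: field_simps power2_eq_square)
    finally have "r\<^sup>2 \<le> p * q" using q0 by (simp add: field_simps)
    thus ?thesis by (simp add: p_def q_def r_def)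
  qed
qed

lemma positive_zero_form:
  assumes A: "positive_op A" and z: "Re (cinner x (A x)) = 0"
  shows "A x = 0"
proof -
  have "(Re (cinner x (A (A x))))\<^sup>2 \<le> 0"
    using positive_CS_Re[OF A, of x "A x"] z by simp
  hence "Re (cinner x (A (A x))) = 0" by simp
  moreover have "cinner x (A (A x)) = cinner (A x) (A x)" by (simp add: positive_selfadj[OF A])
  ultimately have "(norm (A x))\<^sup>2 = 0" by (simp add: Re_cinner_self)
  thus ?thesis by simp
qed

lemma positive_zero_form': "positive_op A \<Longrightarrow> cinner x (A x) = 0 \<Longrightarrow> A x = 0"
  using positive_zero_form by force

section \<open>Coefficients of the square-root series\<close>

definition gco :: "nat \<Rightarrow> real" where
  "gco k = (-1) ^ k * ((1/2::real) gchoose k)"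

lemma gco_poch: "gco k = pochhammer (-1/2) k / fact k"
  by (simp add: gco_def gbinomial_pochhammer power_mult_distrib[symmetric]
      flip: power_add mult.assoc) 

lemma gco_0: "gco 0 = 1" by (simp add: gco_def)

lemma gco_Suc: "gco (Suc k) = - (1/2) * pochhammer (1/2) k / fact (Suc k)"
  by (simp add: gco_poch pochhammer_rec)

lemma gco_Suc_nonpos: "gco (Suc k) \<le> 0"
proof -
  have "0 \<le> pochhammer (1/2::real) k" by (rule pochhammer_nonneg) simp
  thus ?thesis by (simp add: gco_Suc divide_nonneg_pos)
qed

lemma gco_partial: "(\<Sum>k\<le>N. gco k) = pochhammer (1/2) N / fact N"
proof (induction N)
  case 0 thus ?case by (simp add: gco_0)
next
  case (Suc N)
  have "(\<Sum>k\<le>Suc N. gco k) = pochhammer (1/2) N / fact N + gco (Suc N)" using Suc by simp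
  also have "\<dots> = pochhammer (1/2) N * (real N + 1/2) / fact (Suc N)"
  proof -
    define H where "H = pochhammer (1/2::real) N / fact N"
    have g: "gco (Suc N) = - (1/2) * H / (real N + 1)"
      by (simp add: gco_Suc H_def divide_divide_eq_left algebra_simps)
    have r: "pochhammer (1/2) N * (real N + 1/2) / fact (Suc N) = H * (real N + 1/2) / (real N + 1)"
      by (simp add: H_def divide_divide_eq_left algebra_simps)
    have n0: "real N + 1 \<noteq> 0" by linarith
    have "H + - (1/2) * H / (real N + 1) = H * (real N + 1/2) / (real N + 1)"
      using n0 by (simp add: field_simps)
    thus ?thesis using g r H_def by simp
  qed
  also have "\<dots> = pochhammer (1/2) (Suc N) / fact (Suc N)"
    by (simp add: pochhammer_rec' mult.commute add.commute)
  finally show ?case .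
qed

lemma gco_partial_nonneg: "0 \<le> (\<Sum>k\<le>N. gco k)"
  unfolding gco_partial by (intro divide_nonneg_pos pochhammer_nonneg) auto

lemma abs_gco: "\<bar>gco k\<bar> = (if k = 0 then 1 else - gco k)"
  by (cases k) (auto simp: gco_0 gco_Suc_nonpos abs_of_nonpos)

lemma abs_gco_partial: "(\<Sum>k<N. \<bar>gco k\<bar>) \<le> 2"
proof (cases N)
  case 0 thus ?thesis by simp
next
  case (Suc M)
  have "(\<Sum>k<N. \<bar>gco k\<bar>) = (\<Sum>k\<le>M. \<bar>gco k\<bar>)" using Suc lessThan_Suc_atMost by simp
  also have "\<dots> = 1 + (\<Sum>k<M. \<bar>gco (Suc k)\<bar>)"
    by (simp only: sum.atMost_shift gco_0)
  also have "(\<Sum>k<M. \<bar>gco (Suc k)\<bar>) = - (\<Sum>k<M. gco (Suc k))"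
    by (simp add: abs_gco sum_negf)
  also have "(\<Sum>k<M. gco (Suc k)) = (\<Sum>k\<le>M. gco k) - 1"
    by (simp add: sum.atMost_shift gco_0)
  finally show ?thesis using gco_partial_nonneg[of M] by simp
qed

lemma summable_abs_gco: "summable (\<lambda>k. \<bar>gco k\<bar>)"
  by (rule summableI_nonneg_bounded[OF abs_ge_zero abs_gco_partial])

lemma abs_gco_tail: "(\<Sum>k. \<bar>gco (Suc k)\<bar>) \<le> 1"
proof (rule suminf_le_const)
  show "summable (\<lambda>k. \<bar>gco (Suc k)\<bar>)" using summable_abs_gco summable_Suc_iff[of "\<lambda>k. \<bar>gco k\<bar>"] by simp
  fix N
  have "(\<Sum>k<N. \<bar>gco (Suc k)\<bar>) = - (\<Sum>k<N. gco (Suc k))"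
    by (simp add: abs_gco sum_negf)
  also have "(\<Sum>k<N. gco (Suc k)) = (\<Sum>k\<le>N. gco k) - 1"
    by (simp add: sum.atMost_shift gco_0)
  finally show "(\<Sum>k<N. \<bar>gco (Suc k)\<bar>) \<le> 1" using gco_partial_nonneg[of N] by simp
qed

lemma gco_conv: "(\<Sum>i\<le>k. gco i * gco (k - i)) = (if k = 0 then 1 else if k = 1 then -1 else 0)"
proof -
  have "(\<Sum>i\<le>k. gco i * gco (k - i)) = (-1) ^ k * (\<Sum>i\<le>k. ((1/2::real) gchoose i) * ((1/2) gchoose (k - i)))"
  proof -
    have e: "(-1::real)^i * (-1)^(k-i) = (-1)^k" if "i \<le> k" for i
      using that by (simp flip: power_add)
    have "(\<Sum>i\<le>k. gco i * gco (k - i)) = (\<Sum>i\<le>k. (-1) ^ k * (((1/2::real) gchoose i) * ((1/2) gchoose (k - i))))"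
    proof (rule sum.cong)
      fix i assume "i \<in> {..k}"
      hence "(-1::real)^i * (-1)^(k-i) = (-1)^k" using e by simp
      thus "gco i * gco (k - i) = (-1) ^ k * (((1/2::real) gchoose i) * ((1/2) gchoose (k - i)))"
        unfolding gco_def by (metis (no_types, lifting) mult.assoc mult.left_commute)
    qed simp
    thus ?thesis by (simp add: sum_distrib_left)
  qed
  also have "(\<Sum>i\<le>k. ((1/2::real) gchoose i) * ((1/2) gchoose (k - i))) = (1::real) gchoose k"
    using gbinomial_Vandermonde[of "1/2::real" "1/2" k] by (simp add: atLeast0AtMost)
  also have "(1::real) gchoose k = of_nat (1 choose k)"
    using binomial_gbinomial[of 1 k, where 'a=real] by simp
  finally show ?thesis
    by (cases k; cases "k - 1") (auto simp: binomial_eq_0)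
qed



lemma funpow_clinear: "clinear_op T \<Longrightarrow> clinear_op (T ^^ n)"
  by (induction n) (auto simp: clinear_op_def)

locale posop =
  fixes A :: "'a::chilbert \<Rightarrow> 'a"
  assumes pos: "positive_op A"
begin

definition Kc :: real where "Kc = (SOME K. K > 0 \<and> (\<forall>x. norm (A x) \<le> K * norm x))"

lemma Kc: "Kc > 0" "norm (A x) \<le> Kc * norm x"
proof -
  have "\<exists>K. K > 0 \<and> (\<forall>x. norm (A x) \<le> K * norm x)"
    using bounded_op_bound[OF positive_bounded[OF pos]] by blast
  hence "Kc > 0 \<and> (\<forall>x. norm (A x) \<le> Kc * norm x)" unfolding Kc_def by (rule someI_ex)
  thus "Kc > 0" "norm (A x) \<le> Kc * norm x" by auto
qed

lemma AL: "clinear_op A" using pos by (simp add: positive_op_def bounded_op_def)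

definition B :: "'a \<Rightarrow> 'a" where "B x = x - (1 / Kc) *\<^sub>R A x"

lemma BL: "clinear_op B"
  unfolding clinear_op_def B_def
  by (auto simp: clinear_add[OF AL] clinear_cscale[OF AL] cscale_diff_right cscale_scaleR_comm algebra_simps)

lemma Re_A_le: "Re (cinner x (A x)) \<le> Kc * (norm x)\<^sup>2"
proof -
  have "Re (cinner x (A x)) \<le> cmod (cinner x (A x))" by (rule complex_Re_le_cmod)
  also have "\<dots> \<le> norm x * norm (A x)" by (rule cauchy_schwarz)
  also have "\<dots> \<le> norm x * (Kc * norm x)" using Kc by (intro mult_left_mono) auto
  finally show ?thesis by (simp add: power2_eq_square algebra_simps)
qed

lemma inner_B: "cinner x (B x) = complex_of_real ((norm x)\<^sup>2 - Re (cinner x (A x)) / Kc)"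
proof -
  have "cinner x (B x) = cinner x x - complex_of_real (1 / Kc) * cinner x (A x)"
    by (simp add: B_def cinner_diff_right cinner_scaleR_right)
  also have "cinner x (A x) = complex_of_real (Re (cinner x (A x)))" by (rule positive_real[OF pos])
  finally show ?thesis by (simp add: cinner_self)
qed

lemma B_pos: "positive_op B"
  unfolding positive_op_def
proof (intro conjI allI)
  show "bounded_op B"
  proof (rule bounded_opI[OF BL, where K="1 + 1"])
    fix x
    have "norm (B x) \<le> norm x + norm ((1 / Kc) *\<^sub>R A x)" unfolding B_def by (rule norm_triangle_ineq4)
    also have "norm ((1 / Kc) *\<^sub>R A x) \<le> norm x"
      using Kc(2)[of x] Kc(1) by (simp add: field_simps)
    finally show "norm (B x) \<le> (1 + 1) * norm x" by simp
  qed
  fix x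
  show "Im (cinner x (B x)) = 0" by (simp add: inner_B)
  have "Re (cinner x (A x)) / Kc \<le> (norm x)\<^sup>2" using Re_A_le[of x] Kc(1) by (simp add: field_simps)
  thus "0 \<le> Re (cinner x (B x))" by (simp add: inner_B)
qed

lemma Re_B_le: "Re (cinner x (B x)) \<le> (norm x)\<^sup>2"
  using positive_Re[OF pos, of x] Kc(1) by (simp add: inner_B)

lemma norm_B: "norm (B x) \<le> norm x"
proof -
  have "(Re (cinner x (B (B x))))\<^sup>2 \<le> Re (cinner x (B x)) * Re (cinner (B x) (B (B x)))"
    by (rule positive_CS_Re[OF B_pos])
  moreover have "cinner x (B (B x)) = cinner (B x) (B x)"
    by (simp add: positive_selfadj[OF B_pos])
  ultimately have "((norm (B x))\<^sup>2)\<^sup>2 \<le> Re (cinner x (B x)) * Re (cinner (B x) (B (B x)))"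
    by (simp add: Re_cinner_self)
  also have "\<dots> \<le> (norm x)\<^sup>2 * (norm (B x))\<^sup>2"
    using Re_B_le[of x] Re_B_le[of "B x"] positive_Re[OF B_pos, of x] positive_Re[OF B_pos, of "B x"]
    by (intro mult_mono) auto
  finally have h: "((norm (B x))\<^sup>2)\<^sup>2 \<le> (norm x)\<^sup>2 * (norm (B x))\<^sup>2" .
  have "(norm (B x))\<^sup>2 \<le> (norm x)\<^sup>2"
  proof (cases "B x = 0")
    case True thus ?thesis by simp
  next
    case False
    define a where "a = (norm (B x))\<^sup>2"
    define b where "b = (norm x)\<^sup>2"
    have a0: "0 < a" using False by (simp add: a_def)
    have "a * a \<le> b * a" using h by (simp only: a_def b_def power2_eq_square[of "(norm (B x))\<^sup>2"])
    hence "a \<le> b" using a0 by (rule mult_right_le_imp_le)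
    thus ?thesis by (simp add: a_def b_def)
  qed
  thus ?thesis using power2_le_imp_le by fastforce
qed

lemma BnL: "clinear_op (B ^^ n)" by (rule funpow_clinear[OF BL])

lemma norm_Bn: "norm ((B ^^ n) x) \<le> norm x"
  by (induction n) (auto intro: order_trans[OF norm_B])

lemma Bn_selfadj: "cinner ((B ^^ n) x) y = cinner x ((B ^^ n) y)"
proof (induction n arbitrary: x y)
  case 0 thus ?case by simp
next
  case (Suc n)
  have "cinner ((B ^^ Suc n) x) y = cinner (B ((B ^^ n) x)) y" by simp
  also have "\<dots> = cinner ((B ^^ n) x) (B y)" by (simp add: positive_selfadj[OF B_pos])
  also have "\<dots> = cinner x ((B ^^ n) (B y))" by (rule Suc)
  also have "(B ^^ n) (B y) = (B ^^ Suc n) y" by (simp add: funpow_Suc_right del: funpow.simps)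
  finally show ?case .
qed

lemma Bn_real: "cinner x ((B ^^ n) x) = complex_of_real (Re (cinner x ((B ^^ n) x)))"
proof -
  have "cinner x ((B ^^ n) x) = cinner ((B ^^ n) x) x" by (simp add: Bn_selfadj)
  also have "\<dots> = cnj (cinner x ((B ^^ n) x))" by (rule cinner_commute)
  finally have e: "cinner x ((B ^^ n) x) = cnj (cinner x ((B ^^ n) x))" .
  hence "Im (cinner x ((B ^^ n) x)) = 0"
    by (metis add.inverse_inverse cnj.sel(2) neg_equal_zero)
  thus ?thesis by (simp add: complex_eq_iff)
qed

lemma Bn_Re_bound: "\<bar>Re (cinner x ((B ^^ n) x))\<bar> \<le> (norm x)\<^sup>2"
proof -
  have "\<bar>Re (cinner x ((B ^^ n) x))\<bar> \<le> cmod (cinner x ((B ^^ n) x))" by (rule abs_Re_le_cmod)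
  also have "\<dots> \<le> norm x * norm ((B ^^ n) x)" by (rule cauchy_schwarz)
  also have "\<dots> \<le> norm x * norm x" by (intro mult_left_mono norm_Bn) auto
  finally show ?thesis by (simp add: power2_eq_square)
qed

definition trm :: "'a \<Rightarrow> nat \<Rightarrow> 'a" where "trm x n = gco n *\<^sub>R (B ^^ n) x"
definition Rn :: "nat \<Rightarrow> 'a \<Rightarrow> 'a" where "Rn N x = (\<Sum>n<N. trm x n)"
definition R :: "'a \<Rightarrow> 'a" where "R x = (\<Sum>n. trm x n)"

lemma norm_term: "norm (trm x n) \<le> \<bar>gco n\<bar> * norm x"
  unfolding trm_def by (simp add: mult_left_mono norm_Bn)

lemma summable_term: "summable (trm x)"
proof (rule summable_comparison_test'[where N=0])
  show "summable (\<lambda>n. \<bar>gco n\<bar> * norm x)" by (intro summable_mult2 summable_abs_gco)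
  show "norm (trm x n) \<le> \<bar>gco n\<bar> * norm x" for n by (rule norm_term)
qed

lemma Rn_tendsto: "(\<lambda>N. Rn N x) \<longlonglongrightarrow> R x"
  unfolding Rn_def R_def by (rule summable_LIMSEQ[OF summable_term])

lemma norm_Rn: "norm (Rn N x) \<le> 2 * norm x"
proof -
  have "norm (Rn N x) \<le> (\<Sum>n<N. norm (trm x n))" unfolding Rn_def by (rule norm_sum)
  also have "\<dots> \<le> (\<Sum>n<N. \<bar>gco n\<bar> * norm x)" by (intro sum_mono norm_term)
  also have "\<dots> = (\<Sum>n<N. \<bar>gco n\<bar>) * norm x" by (simp add: sum_distrib_right)
  also have "\<dots> \<le> 2 * norm x" by (intro mult_right_mono abs_gco_partial) auto
  finally show ?thesis .
qed

lemma norm_R: "norm (R x) \<le> 2 * norm x"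
proof -
  have "(\<lambda>N. norm (Rn N x)) \<longlonglongrightarrow> norm (R x)" by (intro tendsto_norm Rn_tendsto)
  thus ?thesis using norm_Rn by (intro LIMSEQ_le_const2) auto
qed

lemma term_add: "trm (x + y) n = trm x n + trm y n"
  by (simp add: trm_def clinear_add[OF BnL] scaleR_add_right)

lemma term_cscale: "trm (cscale a x) n = cscale a (trm x n)"
  by (simp add: trm_def clinear_cscale[OF BnL] cscale_scaleR_comm)

lemma R_add: "R (x + y) = R x + R y"
  unfolding R_def term_add using suminf_add[OF summable_term summable_term] by simp

lemma R_cscale: "R (cscale a x) = cscale a (R x)"
  unfolding R_def term_cscale
  using bounded_linear.suminf[OF bounded_linear_cscale summable_term] by simp

lemma RL: "clinear_op R" by (simp add: clinear_op_def R_add R_cscale)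

lemma R_bounded: "bounded_op R" by (rule bounded_opI[OF RL norm_R])

lemma Rn_add: "Rn N (x + y) = Rn N x + Rn N y"
  by (simp add: Rn_def term_add sum.distrib)

lemma Rn_cscale: "Rn N (cscale a x) = cscale a (Rn N x)"
  by (simp add: Rn_def term_cscale cscale_sum_right)

lemma RnL: "clinear_op (Rn N)" by (simp add: clinear_op_def Rn_add Rn_cscale)

lemma R_inner: "cinner x (R x) = complex_of_real (\<Sum>n. gco n * Re (cinner x ((B ^^ n) x)))"
proof -
  have "cinner x (R x) = (\<Sum>n. cinner x (trm x n))"
    unfolding R_def using bounded_linear.suminf[OF bounded_linear_cinner_right summable_term] by simp
  also have "(\<lambda>n. cinner x (trm x n)) = (\<lambda>n. complex_of_real (gco n * Re (cinner x ((B ^^ n) x))))"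
  proof (rule ext)
    fix n
    have "cinner x (trm x n) = complex_of_real (gco n) * cinner x ((B ^^ n) x)"
      by (simp add: trm_def cinner_scaleR_right)
    also have "cinner x ((B ^^ n) x) = complex_of_real (Re (cinner x ((B ^^ n) x)))" by (rule Bn_real)
    finally show "cinner x (trm x n) = complex_of_real (gco n * Re (cinner x ((B ^^ n) x)))" by simp
  qed
  also have "(\<Sum>n. complex_of_real (gco n * Re (cinner x ((B ^^ n) x))))
      = complex_of_real (\<Sum>n. gco n * Re (cinner x ((B ^^ n) x)))"
  proof -
    have s: "summable (\<lambda>n. gco n * Re (cinner x ((B ^^ n) x)))"
    proof (rule summable_comparison_test'[where N=0])
      show "summable (\<lambda>n. \<bar>gco n\<bar> * (norm x)\<^sup>2)" by (intro summable_mult2 summable_abs_gco)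
      show "norm (gco n * Re (cinner x ((B ^^ n) x))) \<le> \<bar>gco n\<bar> * (norm x)\<^sup>2" for n
        using Bn_Re_bound[of x n] by (simp add: abs_mult mult_left_mono)
    qed
    have "(\<lambda>n. complex_of_real (gco n * Re (cinner x ((B ^^ n) x)))) sums
        complex_of_real (\<Sum>n. gco n * Re (cinner x ((B ^^ n) x)))"
      by (rule sums_of_real[OF summable_sums[OF s]])
    thus ?thesis by (rule sums_unique[symmetric])
  qed
  finally show ?thesis .
qed

lemma R_pos: "positive_op R"
  unfolding positive_op_def
proof (intro conjI allI)
  show "bounded_op R" by (rule R_bounded)
  fix x
  show "Im (cinner x (R x)) = 0" by (simp add: R_inner)
  define q where "q n = Re (cinner x ((B ^^ n) x))" for n
  have s: "summable (\<lambda>n. gco n * q n)"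
  proof (rule summable_comparison_test'[where N=0])
    show "summable (\<lambda>n. \<bar>gco n\<bar> * (norm x)\<^sup>2)" by (intro summable_mult2 summable_abs_gco)
    show "norm (gco n * q n) \<le> \<bar>gco n\<bar> * (norm x)\<^sup>2" for n
      using Bn_Re_bound[of x n] by (simp add: q_def abs_mult mult_left_mono)
  qed
  have s1: "summable (\<lambda>n. gco (Suc n) * q (Suc n))" using s summable_Suc_iff[of "\<lambda>n. gco n * q n"] by simp
  have s2: "summable (\<lambda>n. - (\<bar>gco (Suc n)\<bar> * (norm x)\<^sup>2))"
    using summable_abs_gco summable_Suc_iff[of "\<lambda>n. \<bar>gco n\<bar>"]
    by (intro summable_minus summable_mult2) simp
  have "(\<Sum>n. - (\<bar>gco (Suc n)\<bar> * (norm x)\<^sup>2)) \<le> (\<Sum>n. gco (Suc n) * q (Suc n))"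
  proof (rule suminf_le[OF _ s2 s1])
    fix n show "- (\<bar>gco (Suc n)\<bar> * (norm x)\<^sup>2) \<le> gco (Suc n) * q (Suc n)"
    proof -
      have "\<bar>gco (Suc n) * q (Suc n)\<bar> \<le> \<bar>gco (Suc n)\<bar> * (norm x)\<^sup>2"
        using Bn_Re_bound[of x "Suc n"] by (simp add: q_def abs_mult mult_left_mono)
      thus ?thesis by linarith
    qed
  qed
  moreover have "(\<Sum>n. - (\<bar>gco (Suc n)\<bar> * (norm x)\<^sup>2)) = - ((\<Sum>n. \<bar>gco (Suc n)\<bar>) * (norm x)\<^sup>2)"
  proof -
    have t: "summable (\<lambda>n. \<bar>gco (Suc n)\<bar>)"
      using summable_abs_gco summable_Suc_iff[of "\<lambda>n. \<bar>gco n\<bar>"] by simp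
    have "(\<Sum>n. - (\<bar>gco (Suc n)\<bar> * (norm x)\<^sup>2)) = - (\<Sum>n. \<bar>gco (Suc n)\<bar> * (norm x)\<^sup>2)"
      by (rule suminf_minus[OF summable_mult2[OF t]])
    also have "(\<Sum>n. \<bar>gco (Suc n)\<bar> * (norm x)\<^sup>2) = (\<Sum>n. \<bar>gco (Suc n)\<bar>) * (norm x)\<^sup>2"
      by (rule suminf_mult2[OF t, symmetric])
    finally show ?thesis .
  qed
  moreover have "(\<Sum>n. \<bar>gco (Suc n)\<bar>) * (norm x)\<^sup>2 \<le> (norm x)\<^sup>2"
  proof -
    have t: "summable (\<lambda>n. \<bar>gco (Suc n)\<bar>)"
      using summable_abs_gco summable_Suc_iff[of "\<lambda>n. \<bar>gco n\<bar>"] by simp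
    have "0 \<le> (\<Sum>n. \<bar>gco (Suc n)\<bar>)" by (rule suminf_nonneg[OF t]) simp
    thus ?thesis using abs_gco_tail by (intro mult_left_le_one_le) auto
  qed
  ultimately have "- (norm x)\<^sup>2 \<le> (\<Sum>n. gco (Suc n) * q (Suc n))" by linarith
  moreover have "(\<Sum>n. gco n * q n) = (\<Sum>n. gco (Suc n) * q (Suc n)) + gco 0 * q 0"
    using suminf_split_head[OF s] by simp
  moreover have "q 0 = (norm x)\<^sup>2" by (simp add: q_def Re_cinner_self)
  ultimately have "0 \<le> (\<Sum>n. gco n * q n)" by (simp add: gco_0)
  thus "0 \<le> Re (cinner x (R x))" by (simp add: R_inner q_def)
qed

end


context posop begin

lemma Bn_add_exp: "(B ^^ n) ((B ^^ m) x) = (B ^^ (n + m)) x"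
  by (simp add: funpow_add)

lemma Rn_Rn: "Rn N (Rn N x) = (\<Sum>n<N. \<Sum>m<N. (gco n * gco m) *\<^sub>R (B ^^ (n + m)) x)"
proof -
  have "Rn N (Rn N x) = (\<Sum>n<N. gco n *\<^sub>R (B ^^ n) (\<Sum>m<N. gco m *\<^sub>R (B ^^ m) x))"
    by (simp add: Rn_def trm_def)
  also have "\<dots> = (\<Sum>n<N. \<Sum>m<N. (gco n * gco m) *\<^sub>R (B ^^ (n + m)) x)"
    by (simp add: clinear_sum[OF BnL] clinear_scaleR[OF BnL] scaleR_right.sum Bn_add_exp)
  finally show ?thesis .
qed

abbreviation "S1 N \<equiv> {..<(N::nat)} \<times> {..<N}"
abbreviation "S2 N \<equiv> {(i,j). i + j < (N::nat)}"

lemma S2_sub: "S2 N \<subseteq> S1 N" by auto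
lemma fin_S1: "finite (S1 N)" by simp
lemma fin_S2: "finite (S2 N)" using finite_subset[OF S2_sub fin_S1] .

definition f2 :: "'a \<Rightarrow> nat \<times> nat \<Rightarrow> 'a" where
  "f2 x p = (gco (fst p) * gco (snd p)) *\<^sub>R (B ^^ (fst p + snd p)) x"

lemma square_sum: "Rn N (Rn N x) = sum (f2 x) (S1 N)"
  unfolding Rn_Rn f2_def by (simp add: sum.cartesian_product case_prod_beta')

lemma tri_sum: "sum (f2 x) (S2 N) = (\<Sum>k<N. (\<Sum>i\<le>k. gco i * gco (k - i)) *\<^sub>R (B ^^ k) x)"
proof -
  have "sum (f2 x) (S2 N) = (\<Sum>(i,j)\<in>S2 N. (gco i * gco j) *\<^sub>R (B ^^ (i + j)) x)"
    by (rule sum.cong) (auto simp: f2_def)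
  also have "\<dots> = (\<Sum>k<N. \<Sum>i\<le>k. (gco i * gco (k - i)) *\<^sub>R (B ^^ (i + (k - i))) x)"
    by (rule sum.triangle_reindex)
  also have "\<dots> = (\<Sum>k<N. \<Sum>i\<le>k. (gco i * gco (k - i)) *\<^sub>R (B ^^ k) x)"
    by (intro sum.cong refl) auto
  also have "\<dots> = (\<Sum>k<N. (\<Sum>i\<le>k. gco i * gco (k - i)) *\<^sub>R (B ^^ k) x)"
    by (simp add: scaleR_left.sum)
  finally show ?thesis .
qed

lemma sum_first_two:
  fixes f :: "nat \<Rightarrow> 'b::comm_monoid_add"
  assumes "\<And>k. k \<ge> 2 \<Longrightarrow> f k = 0"
  shows "(\<Sum>k<Suc (Suc M). f k) = f 0 + f 1"
proof (induction M)
  case 0 thus ?case by (simp add: lessThan_Suc add.commute)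
next
  case (Suc M) thus ?case using assms[of "Suc (Suc M)"] by simp
qed

lemma tri_sum_val: "N \<ge> 2 \<Longrightarrow> sum (f2 x) (S2 N) = x - B x"
proof -
  assume N: "N \<ge> 2"
  then obtain M where M: "N = Suc (Suc M)" by (metis add_2_eq_Suc le_Suc_ex)
  have "sum (f2 x) (S2 N) = (\<Sum>k<N. (if k = 0 then 1 else if k = 1 then -1 else 0) *\<^sub>R (B ^^ k) x)"
    unfolding tri_sum gco_conv ..
  also have "\<dots> = x - B x"
    unfolding M by (subst sum_first_two) auto
  finally show ?thesis .
qed

definition e :: "nat \<Rightarrow> real" where
  "e N = (\<Sum>p\<in>S1 N. \<bar>gco (fst p)\<bar> * \<bar>gco (snd p)\<bar>) - (\<Sum>p\<in>S2 N. \<bar>gco (fst p)\<bar> * \<bar>gco (snd p)\<bar>)"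

lemma e_tendsto: "e \<longlonglongrightarrow> 0"
proof -
  define G where "G = (\<Sum>k. \<bar>gco k\<bar>)"
  have a: "(\<lambda>N. \<Sum>p\<in>S1 N. \<bar>gco (fst p)\<bar> * \<bar>gco (snd p)\<bar>) = (\<lambda>N. (\<Sum>i<N. \<bar>gco i\<bar>) * (\<Sum>j<N. \<bar>gco j\<bar>))"
    by (rule ext) (simp add: sum_product sum.cartesian_product case_prod_beta')
  have t1: "(\<lambda>N. (\<Sum>i<N. \<bar>gco i\<bar>) * (\<Sum>j<N. \<bar>gco j\<bar>)) \<longlonglongrightarrow> G * G"
    unfolding G_def by (intro tendsto_mult summable_LIMSEQ summable_abs_gco)
  have b: "(\<lambda>N. \<Sum>p\<in>S2 N. \<bar>gco (fst p)\<bar> * \<bar>gco (snd p)\<bar>) = (\<lambda>N. \<Sum>k<N. \<Sum>i\<le>k. \<bar>gco i\<bar> * \<bar>gco (k - i)\<bar>)"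
  proof (rule ext)
    fix N
    have "(\<Sum>p\<in>S2 N. \<bar>gco (fst p)\<bar> * \<bar>gco (snd p)\<bar>) = (\<Sum>(i,j)\<in>S2 N. \<bar>gco i\<bar> * \<bar>gco j\<bar>)"
      by (rule sum.cong) auto
    also have "\<dots> = (\<Sum>k<N. \<Sum>i\<le>k. \<bar>gco i\<bar> * \<bar>gco (k - i)\<bar>)" by (rule sum.triangle_reindex)
    finally show "(\<Sum>p\<in>S2 N. \<bar>gco (fst p)\<bar> * \<bar>gco (snd p)\<bar>) = (\<Sum>k<N. \<Sum>i\<le>k. \<bar>gco i\<bar> * \<bar>gco (k - i)\<bar>)" .
  qed
  have "(\<lambda>k. \<Sum>i\<le>k. \<bar>gco i\<bar> * \<bar>gco (k - i)\<bar>) sums (G * G)"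
    unfolding G_def using summable_abs_gco by (intro Cauchy_product_sums) auto
  hence t2: "(\<lambda>N. \<Sum>k<N. \<Sum>i\<le>k. \<bar>gco i\<bar> * \<bar>gco (k - i)\<bar>) \<longlonglongrightarrow> G * G"
    by (simp add: sums_def)
  have "(\<lambda>N. (\<Sum>i<N. \<bar>gco i\<bar>) * (\<Sum>j<N. \<bar>gco j\<bar>) - (\<Sum>k<N. \<Sum>i\<le>k. \<bar>gco i\<bar> * \<bar>gco (k - i)\<bar>)) \<longlonglongrightarrow> G * G - G * G"
    by (intro tendsto_diff t1 t2)
  thus ?thesis unfolding e_def[abs_def] a[unfolded fun_eq_iff, rule_format] b[unfolded fun_eq_iff, rule_format] by simp
qed

lemma norm_diff_part: "norm (sum (f2 x) (S1 N - S2 N)) \<le> e N * norm x"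
proof -
  have "norm (sum (f2 x) (S1 N - S2 N)) \<le> (\<Sum>p\<in>S1 N - S2 N. norm (f2 x p))" by (rule norm_sum)
  also have "\<dots> \<le> (\<Sum>p\<in>S1 N - S2 N. \<bar>gco (fst p)\<bar> * \<bar>gco (snd p)\<bar> * norm x)"
  proof (rule sum_mono)
    fix p
    show "norm (f2 x p) \<le> \<bar>gco (fst p)\<bar> * \<bar>gco (snd p)\<bar> * norm x"
      unfolding f2_def using norm_Bn[of "fst p + snd p" x]
      by (simp add: abs_mult mult_left_mono)
  qed
  also have "\<dots> = (\<Sum>p\<in>S1 N - S2 N. \<bar>gco (fst p)\<bar> * \<bar>gco (snd p)\<bar>) * norm x"
    by (simp add: sum_distrib_right)
  also have "(\<Sum>p\<in>S1 N - S2 N. \<bar>gco (fst p)\<bar> * \<bar>gco (snd p)\<bar>) = e N"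
    unfolding e_def by (rule sum_diff[OF fin_S1 S2_sub])
  finally show ?thesis .
qed

lemma RnRn_tendsto1: "(\<lambda>N. Rn N (Rn N x)) \<longlonglongrightarrow> x - B x"
proof -
  have d: "(\<lambda>N. sum (f2 x) (S1 N - S2 N)) \<longlonglongrightarrow> 0"
  proof (rule Lim_null_comparison)
    show "\<forall>\<^sub>F N in sequentially. norm (sum (f2 x) (S1 N - S2 N)) \<le> e N * norm x"
      by (intro always_eventually allI norm_diff_part)
    show "(\<lambda>N. e N * norm x) \<longlonglongrightarrow> 0"
      using tendsto_mult_left_zero[OF e_tendsto] .
  qed
  have eq: "\<forall>\<^sub>F N in sequentially. (x - B x) + sum (f2 x) (S1 N - S2 N) = Rn N (Rn N x)"
  proof (rule eventually_sequentiallyI[of 2])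
    fix N :: nat assume N: "2 \<le> N"
    have "Rn N (Rn N x) = sum (f2 x) (S2 N) + sum (f2 x) (S1 N - S2 N)"
      unfolding square_sum sum_diff[OF fin_S1 S2_sub] by simp
    thus "(x - B x) + sum (f2 x) (S1 N - S2 N) = Rn N (Rn N x)" using tri_sum_val[OF N] by simp
  qed
  have "(\<lambda>N. (x - B x) + sum (f2 x) (S1 N - S2 N)) \<longlonglongrightarrow> (x - B x) + 0"
    by (intro tendsto_add tendsto_const d)
  hence "(\<lambda>N. (x - B x) + sum (f2 x) (S1 N - S2 N)) \<longlonglongrightarrow> x - B x" by simp
  thus ?thesis using eq by (rule Lim_transform_eventually)
qed

lemma RnRn_tendsto2: "(\<lambda>N. Rn N (Rn N x)) \<longlonglongrightarrow> R (R x)"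
proof -
  have z: "(\<lambda>N. Rn N (Rn N x - R x)) \<longlonglongrightarrow> 0"
  proof (rule Lim_null_comparison)
    show "\<forall>\<^sub>F N in sequentially. norm (Rn N (Rn N x - R x)) \<le> 2 * norm (Rn N x - R x)"
      by (intro always_eventually allI norm_Rn)
    have "(\<lambda>N. Rn N x - R x) \<longlonglongrightarrow> 0" using Rn_tendsto[of x] by (simp add: LIM_zero)
    hence "(\<lambda>N. norm (Rn N x - R x)) \<longlonglongrightarrow> 0" by (rule tendsto_norm_zero)
    thus "(\<lambda>N. 2 * norm (Rn N x - R x)) \<longlonglongrightarrow> 0" by (rule tendsto_mult_right_zero)
  qed
  have "(\<lambda>N. Rn N (Rn N x - R x) + Rn N (R x)) \<longlonglongrightarrow> 0 + R (R x)"
    by (intro tendsto_add z Rn_tendsto)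
  moreover have "Rn N (Rn N x - R x) + Rn N (R x) = Rn N (Rn N x)" for N
    by (simp add: clinear_diff[OF RnL])
  ultimately show ?thesis by simp
qed

lemma RR: "R (R x) = x - B x"
  using LIMSEQ_unique[OF RnRn_tendsto2 RnRn_tendsto1] .

definition Sq :: "'a \<Rightarrow> 'a" where "Sq x = sqrt Kc *\<^sub>R R x"

lemma Sq_Sq: "Sq (Sq x) = A x"
proof -
  have "Sq (Sq x) = (sqrt Kc * sqrt Kc) *\<^sub>R R (R x)"
    by (simp add: Sq_def clinear_scaleR[OF RL])
  also have "sqrt Kc * sqrt Kc = Kc" using Kc(1) by simp
  also have "Kc *\<^sub>R R (R x) = A x" using Kc(1) by (simp add: RR B_def)
  finally show ?thesis .
qed

lemma Sq_pos: "positive_op Sq"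
  unfolding positive_op_def
proof (intro conjI allI)
  have "bounded_op (\<lambda>x. cscale (complex_of_real (sqrt Kc)) (R x))"
    by (rule bounded_op_cscale[OF R_bounded])
  thus "bounded_op Sq" by (simp add: Sq_def[abs_def] scaleR_cscale)
  fix x
  have e: "cinner x (Sq x) = complex_of_real (sqrt Kc) * cinner x (R x)"
    by (simp add: Sq_def cinner_scaleR_right)
  show "Im (cinner x (Sq x)) = 0" using positive_Im[OF R_pos, of x] by (simp add: e)
  show "0 \<le> Re (cinner x (Sq x))" using positive_Re[OF R_pos, of x] Kc(1) by (simp add: e)
qed

lemma comm_Sq:
  assumes S: "bounded_op S" and SA: "\<And>x. S (A x) = A (S x)"
  shows "S (Sq x) = Sq (S x)"
proof -
  have L: "clinear_op S" using S by (rule bounded_op_clinear)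
  have SB: "S (B x) = B (S x)" for x by (simp add: B_def clinear_diff[OF L] clinear_scaleR[OF L] SA)
  have SBn: "S ((B ^^ n) x) = (B ^^ n) (S x)" for n x by (induction n) (simp_all add: SB)
  have Strm: "S (trm x n) = trm (S x) n" for n by (simp add: trm_def clinear_scaleR[OF L] SBn)
  have "S (R x) = (\<Sum>n. S (trm x n))"
    unfolding R_def using bounded_linear.suminf[OF bounded_op_bounded_linear[OF S] summable_term] by simp
  also have "\<dots> = R (S x)" by (simp add: Strm R_def)
  finally show ?thesis by (simp add: Sq_def clinear_scaleR[OF L])
qed

end

lemma pos_sqrt_unique:
  assumes S: "positive_op S" and Q: "positive_op Q"
    and comm: "\<And>x. S (Q x) = Q (S x)" and sq: "\<And>x. S (S x) = Q (Q x)"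
  shows "S x = Q x"
proof -
  have SL: "clinear_op S" using S by (simp add: positive_op_def bounded_op_def)
  have QL: "clinear_op Q" using Q by (simp add: positive_op_def bounded_op_def)
  define y where "y = S x - Q x"
  have "S y + Q y = S (S x) - S (Q x) + (Q (S x) - Q (Q x))"
    by (simp add: y_def clinear_diff[OF SL] clinear_diff[OF QL])
  also have "\<dots> = 0" by (simp add: comm sq)
  finally have "S y + Q y = 0" .
  hence "cinner y (S y) + cinner y (Q y) = 0" by (metis cinner_add_right cinner_zero_right)
  hence "Re (cinner y (S y)) + Re (cinner y (Q y)) = 0" by (metis plus_complex.sel(1) zero_complex.sel(1))
  hence "Re (cinner y (S y)) = 0" "Re (cinner y (Q y)) = 0"
    using positive_Re[OF S, of y] positive_Re[OF Q, of y] by linarith+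
  hence Sy: "S y = 0" and Qy: "Q y = 0" using positive_zero_form S Q by blast+
  have "cinner y y = cinner y (S x) - cinner y (Q x)" by (simp add: y_def cinner_diff_right)
  also have "cinner y (S x) = cinner (S y) x" by (simp add: positive_selfadj[OF S])
  also have "cinner y (Q x) = cinner (Q y) x" by (simp add: positive_selfadj[OF Q])
  finally have "y = 0" using Sy Qy by simp
  thus ?thesis by (simp add: y_def)
qed

lemma op_sqrt_char:
  assumes A: "positive_op A"
  shows "positive_op (op_sqrt A) \<and> op_sqrt A \<circ> op_sqrt A = A"
proof -
  interpret posop A by unfold_locales (rule A)
  have P: "positive_op Sq \<and> Sq \<circ> Sq = A" using Sq_pos Sq_Sq by (auto simp: fun_eq_iff)
  have U: "S = Sq" if "positive_op S \<and> S \<circ> S = A" for S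
  proof (rule ext)
    fix x
    have SS: "S (S x) = A x" for x using that by (auto simp: fun_eq_iff)
    have SA: "S (A x) = A (S x)" for x by (simp flip: SS)
    show "S x = Sq x"
    proof (rule pos_sqrt_unique[where S=S and Q=Sq])
      show "positive_op S" using that by simp
      show "positive_op Sq" by (rule Sq_pos)
      have Sb: "bounded_op S" using that positive_bounded by blast
      show "S (Sq x) = Sq (S x)" for x by (rule comm_Sq[where S=S, OF Sb SA])
      show "S (S x) = Sq (Sq x)" for x by (simp add: SS Sq_Sq)
    qed
  qed
  have "op_sqrt A = Sq" unfolding op_sqrt_def using P U by (rule the_equality)
  thus ?thesis using P by simp
qed

lemma op_sqrt_pos: "positive_op A \<Longrightarrow> positive_op (op_sqrt A)"
  using op_sqrt_char by blast

lemma op_sqrt_sq: "positive_op A \<Longrightarrow> op_sqrt A (op_sqrt A x) = A x"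
  using op_sqrt_char by (metis comp_apply)

lemma op_sqrt_kernel:
  assumes A: "positive_op A"
  shows "op_sqrt A x = 0 \<longleftrightarrow> A x = 0"
proof
  assume "op_sqrt A x = 0"
  hence "op_sqrt A (op_sqrt A x) = 0"
    using clinear_zero[of "op_sqrt A"] op_sqrt_pos[OF A] by (simp add: positive_op_def bounded_op_def)
  thus "A x = 0" by (simp add: op_sqrt_sq[OF A])
next
  assume Ax: "A x = 0"
  have "cinner (op_sqrt A x) (op_sqrt A x) = cinner x (op_sqrt A (op_sqrt A x))"
    by (simp add: positive_selfadj[OF op_sqrt_pos[OF A]])
  also have "\<dots> = 0" by (simp add: op_sqrt_sq[OF A] Ax)
  finally show "op_sqrt A x = 0" by simp
qed



lemma csubspace_range: "clinear_op A \<Longrightarrow> csubspace (range A)"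
  unfolding csubspace_def
proof (intro conjI ballI allI)
  assume L: "clinear_op A"
  show "0 \<in> range A" using clinear_zero[OF L] by (metis rangeI)
  fix x y assume "x \<in> range A" "y \<in> range A"
  then obtain a b where "x = A a" "y = A b" by auto
  thus "x + y \<in> range A" using clinear_add[OF L, of a b] by (metis rangeI)
next
  fix c x assume L: "clinear_op A" and "x \<in> range A"
  then obtain a where "x = A a" by auto
  thus "cscale c x \<in> range A" using clinear_cscale[OF L, of c a] by (metis rangeI)
qed

lemma closed_orth: "closed {x. cinner k x = (0::complex)}"
proof -
  have "continuous_on UNIV (cinner k)"
    using bounded_linear.continuous_on[OF bounded_linear_cinner_right continuous_on_id] by simp
  thus ?thesis by (intro closed_Collect_eq continuous_on_const) auto
qed

locale posM = posop A for A :: "'a::chilbert \<Rightarrow> 'a"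
begin

definition M :: "'a set" where "M = closure (range A)"
definition S :: "'a \<Rightarrow> 'a" where "S = op_sqrt A"

lemma M_sub: "closed_subspace M"
  unfolding M_def by unfold_locales (auto intro: closure_csubspace csubspace_range AL)

sublocale Msub: closed_subspace M by (rule M_sub)

lemma S_pos: "positive_op S" unfolding S_def by (rule op_sqrt_pos[OF pos])
lemma SS: "S (S x) = A x" unfolding S_def by (rule op_sqrt_sq[OF pos])
lemma S_ker: "S x = 0 \<longleftrightarrow> A x = 0" unfolding S_def by (rule op_sqrt_kernel[OF pos])
lemma SL: "clinear_op S" using S_pos by (simp add: positive_op_def bounded_op_def)

lemma M_char: "x \<in> M \<longleftrightarrow> (\<forall>k. A k = 0 \<longrightarrow> cinner k x = 0)"
proof
  assume x: "x \<in> M"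
  show "\<forall>k. A k = 0 \<longrightarrow> cinner k x = 0"
  proof (intro allI impI)
    fix k assume k: "A k = 0"
    have "range A \<subseteq> {x. cinner k x = 0}"
    proof
      fix y assume "y \<in> range A"
      then obtain z where "y = A z" by auto
      thus "y \<in> {x. cinner k x = 0}" using k by (simp add: positive_selfadj[OF pos, symmetric])
    qed
    hence "M \<subseteq> {x. cinner k x = 0}" unfolding M_def by (rule closure_minimal[OF _ closed_orth])
    thus "cinner k x = 0" using x by auto
  qed
next
  assume h: "\<forall>k. A k = 0 \<longrightarrow> cinner k x = 0"
  define w where "w = x - proj M x"
  have "cinner z (A w) = 0" for z
  proof -
    have "A z \<in> M" unfolding M_def by (simp add: closure_subset[THEN subsetD])
    hence "cinner (A z) w = 0" unfolding w_def by (rule Msub.proj_orth)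
    thus ?thesis using positive_selfadj[OF pos, of z w] by simp
  qed
  hence "A w = 0" by (rule cinner_eq_zero_all)
  hence "cinner w x = 0" using h by blast
  moreover have "cinner w (proj M x) = 0"
    using Msub.proj_orth[OF Msub.proj_in, of x] by (metis cinner_commute complex_cnj_zero w_def)
  ultimately have "cinner w w = 0" by (simp add: w_def cinner_diff_right)
  hence "w = 0" by simp
  thus "x \<in> M" using Msub.proj_in[of x] by (simp add: w_def)
qed

lemma ker_orth_M: "A k = 0 \<Longrightarrow> m \<in> M \<Longrightarrow> cinner k m = 0"
  using M_char by blast

lemma A_in_M: "A x \<in> M" unfolding M_def by (simp add: closure_subset[THEN subsetD])

lemma S_in_M: "S x \<in> M"
  unfolding M_char
proof (intro allI impI)
  fix k assume "A k = 0"
  hence "S k = 0" using S_ker by simp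
  thus "cinner k (S x) = 0" by (simp add: positive_selfadj[OF S_pos, symmetric])
qed

lemma A_proj: "A (proj M w) = A w"
proof -
  have "cinner z (A (w - proj M w)) = 0" for z
  proof -
    have "cinner (A z) (w - proj M w) = 0" by (rule Msub.proj_orth[OF A_in_M])
    thus ?thesis using positive_selfadj[OF pos, of z "w - proj M w"] by simp
  qed
  hence "A (w - proj M w) = 0" by (rule cinner_eq_zero_all)
  thus ?thesis by (simp add: clinear_diff[OF AL])
qed

lemma S_proj: "S (proj M w) = S w"
proof -
  have "A (w - proj M w) = 0" by (simp add: clinear_diff[OF AL] A_proj)
  hence "S (w - proj M w) = 0" using S_ker by simp
  thus ?thesis by (simp add: clinear_diff[OF SL])
qed

lemma M_inter_ker: "m \<in> M \<Longrightarrow> A m = 0 \<Longrightarrow> m = 0"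
  using ker_orth_M[of m m] by simp

lemma range_S_dense: "M \<subseteq> closure (range S)"
proof -
  have "range A \<subseteq> range S" by (auto simp flip: SS)
  thus ?thesis unfolding M_def by (rule closure_mono)
qed

lemma norm_S_sq: "(norm (S x))\<^sup>2 = Re (cinner x (A x))"
proof -
  have "cinner (S x) (S x) = cinner x (A x)" by (simp add: positive_selfadj[OF S_pos] SS)
  thus ?thesis by (metis Re_cinner_self)
qed

end

locale regop = posM A for A :: "'a::chilbert \<Rightarrow> 'a" +
  fixes T :: "'a \<Rightarrow> 'a"
  assumes T: "bounded_op T" and reg: "regular A T"
begin

lemma TL: "clinear_op T" using T by (rule bounded_op_clinear)

lemma reg': "A (T x) = S (T (S x))"
  using reg unfolding regular_def S_def by (metis comp_apply)

lemma G1: "proj M (T (S x)) = S (T x)"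
proof -
  have "S (S (T x) - T (S x)) = 0"
    by (simp add: clinear_diff[OF SL] SS reg')
  hence "A (S (T x) - T (S x)) = 0" using S_ker by simp
  hence "proj M (S (T x) - T (S x)) = 0"
    by (intro Msub.proj_zero) (metis ker_orth_M cinner_commute complex_cnj_zero)
  hence "proj M (S (T x)) = proj M (T (S x))" by (simp add: Msub.proj_diff)
  thus ?thesis using Msub.proj_id[OF S_in_M] by simp
qed

lemma G2: "proj M (T (A x)) = A (T x)"
  using G1[of "S x"] by (simp add: SS reg')

lemma T_ker: "A k = 0 \<Longrightarrow> A (T k) = 0"
proof -
  assume "A k = 0"
  hence "S k = 0" using S_ker by simp
  thus ?thesis by (simp add: reg' clinear_zero[OF TL] clinear_zero[OF SL])
qed

lemma G3: assumes m: "m \<in> M" shows "adj T m \<in> M"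
  unfolding M_char
proof (intro allI impI)
  fix k assume k: "A k = 0"
  have "cinner k (adj T m) = cinner (T k) m" by (simp add: adj1[OF T])
  also have "\<dots> = 0" using ker_orth_M[OF T_ker[OF k] m] .
  finally show "cinner k (adj T m) = 0" .
qed

lemma G4: assumes m: "m \<in> M" shows "S (adj T m) = adj T (S m)"
proof (rule cinner_ext)
  fix x
  have "cinner x (S (adj T m)) = cinner (S x) (adj T m)" by (simp add: positive_selfadj[OF S_pos])
  also have "\<dots> = cinner (T (S x)) m" by (simp add: adj1[OF T])
  also have "\<dots> = cinner (proj M (T (S x))) m" by (simp add: Msub.proj_inner_M'[OF m])
  also have "\<dots> = cinner (S (T x)) m" by (simp add: G1)
  also have "\<dots> = cinner (T x) (S m)" by (simp add: positive_selfadj[OF S_pos])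
  also have "\<dots> = cinner x (adj T (S m))" by (simp add: adj1[OF T])
  finally show "cinner x (S (adj T m)) = cinner x (adj T (S m))" .
qed

lemma G5: assumes m: "m \<in> M" shows "A (adj T m) = adj T (A m)"
proof (rule cinner_ext)
  fix x
  have "cinner x (A (adj T m)) = cinner (A x) (adj T m)" by (simp add: positive_selfadj[OF pos])
  also have "\<dots> = cinner (T (A x)) m" by (simp add: adj1[OF T])
  also have "\<dots> = cinner (proj M (T (A x))) m" by (simp add: Msub.proj_inner_M'[OF m])
  also have "\<dots> = cinner (A (T x)) m" by (simp add: G2)
  also have "\<dots> = cinner (T x) (A m)" by (simp add: positive_selfadj[OF pos])
  also have "\<dots> = cinner x (adj T (A m))" by (simp add: adj1[OF T])
  finally show "cinner x (A (adj T m)) = cinner x (adj T (A m))" .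
qed

end



locale mainctx =
  fixes T :: "'a::chilbert \<Rightarrow> 'a"
  assumes T: "bounded_op T"
    and CH: "completely_hyperexpansive T"
    and reg2: "regular (A_op 2 T) T"
    and reg3: "regular (A_op 3 T) T"
begin

abbreviation "D n \<equiv> A_op n T"
definition q :: "nat \<Rightarrow> 'a \<Rightarrow> real" where "q n x = Re (cinner x (A_op n T x))"

lemma posD: "n \<ge> 1 \<Longrightarrow> positive_op (D n)"
  using CH by (simp add: completely_hyperexpansive_def)

lemma q_nonneg: "n \<ge> 1 \<Longrightarrow> 0 \<le> q n x"
  unfolding q_def by (rule positive_Re[OF posD])

lemma q_rec: "q (Suc n) x = q n x - q n (T x)"
proof -
  have "cinner x (D (Suc n) x) = cinner x (D n x) - cinner x (adj T (D n (T x)))"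
    by (simp add: A_op_Suc[OF T] cinner_diff_right)
  also have "cinner x (adj T (D n (T x))) = cinner (T x) (D n (T x))" by (simp add: adj1[OF T])
  finally show ?thesis by (simp add: q_def)
qed

lemma TL: "clinear_op T" using T by (rule bounded_op_clinear)

lemma telescope: "(\<Sum>n<N. q 2 ((T ^^ n) z)) = q 1 z - q 1 ((T ^^ N) z)"
proof (induction N)
  case 0 thus ?case by simp
next
  case (Suc N)
  have "q 2 ((T ^^ N) z) = q 1 ((T ^^ N) z) - q 1 ((T ^^ Suc N) z)"
    using q_rec[of 1 "(T ^^ N) z"] by (simp add: numeral_2_eq_2)
  thus ?case using Suc by simp
qed

lemma telescope_le: "(\<Sum>n<N. q 2 ((T ^^ n) z)) \<le> q 1 z"
  using telescope[where N=N and z=z] q_nonneg[of 1 "(T ^^ N) z"] by simp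

lemma small_q2: assumes e: "e > 0" shows "\<exists>n. q 2 ((T ^^ n) z) < e"
proof (rule ccontr)
  assume "\<not> ?thesis"
  hence h: "\<And>n. e \<le> q 2 ((T ^^ n) z)" by (simp add: not_less)
  obtain N :: nat where N: "q 1 z / e < real N" using reals_Archimedean2 by blast
  have "real N * e = (\<Sum>n<N. e)" by simp
  also have "\<dots> \<le> (\<Sum>n<N. q 2 ((T ^^ n) z))" by (intro sum_mono h)
  also have "\<dots> \<le> q 1 z" by (rule telescope_le)
  finally have "real N * e \<le> q 1 z" .
  thus False using N e by (simp add: field_simps)
qed

lemma ker32: assumes z: "D 3 z = 0" shows "D 2 z = 0"
proof -
  have q3z: "q 3 z = 0" by (simp add: q_def z)
  have q3: "q 3 ((T ^^ n) z) = 0" for n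
  proof (induction n)
    case 0 thus ?case by (simp add: q3z)
  next
    case (Suc n)
    have "q 4 ((T ^^ n) z) = q 3 ((T ^^ n) z) - q 3 (T ((T ^^ n) z))"
      using q_rec[of 3] by (simp add: numeral_eq_Suc)
    hence "q 3 ((T ^^ Suc n) z) \<le> 0" using Suc q_nonneg[of 4 "(T ^^ n) z"] by simp
    thus ?case using q_nonneg[of 3 "(T ^^ Suc n) z"] by simp
  qed
  have q2: "q 2 ((T ^^ n) z) = q 2 z" for n
  proof (induction n)
    case 0 thus ?case by simp
  next
    case (Suc n)
    have "q 3 ((T ^^ n) z) = q 2 ((T ^^ n) z) - q 2 (T ((T ^^ n) z))"
      using q_rec[of 2] by (simp add: numeral_eq_Suc)
    thus ?case using Suc q3[of n] by simp
  qed
  have "q 2 z \<le> 0"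
  proof (rule ccontr)
    assume "\<not> q 2 z \<le> 0"
    hence "q 2 z > 0" by simp
    from small_q2[OF this, of z] obtain n where "q 2 ((T ^^ n) z) < q 2 z" by blast
    thus False using q2[of n] by simp
  qed
  hence "q 2 z = 0" using q_nonneg[of 2 z] by simp
  thus ?thesis unfolding q_def by (intro positive_zero_form[OF posD]) auto
qed

lemma ker23: assumes z: "D 2 z = 0" shows "D 3 z = 0"
proof -
  have "q 2 z = 0" by (simp add: q_def z)
  moreover have "q 3 z = q 2 z - q 2 (T z)" using q_rec[of 2] by (simp add: numeral_eq_Suc)
  ultimately have "q 3 z \<le> 0" using q_nonneg[of 2 "T z"] by simp
  hence "q 3 z = 0" using q_nonneg[of 3 z] by simp
  thus ?thesis unfolding q_def by (intro positive_zero_form[OF posD]) auto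
qed

sublocale R2: regop "D 2" T
  by unfold_locales (auto intro: posD T reg2)

sublocale R3: regop "D 3" T
  by unfold_locales (auto intro: posD T reg3)

lemma M_eq: "R3.M = R2.M"
proof
  show "R3.M \<subseteq> R2.M"
    unfolding subset_iff R3.M_char R2.M_char using ker23 by blast
  show "R2.M \<subseteq> R3.M"
    unfolding subset_iff R3.M_char R2.M_char using ker32 by blast
qed

abbreviation "M \<equiv> R2.M"
abbreviation "P \<equiv> proj R2.M"
abbreviation "S \<equiv> R2.S"
abbreviation "Ta \<equiv> adj T"
definition C :: "'a \<Rightarrow> 'a" where "C x = proj R2.M (T x)"

lemma C_in: "C x \<in> M" unfolding C_def by (rule R2.Msub.proj_in)

lemma CL: "clinear_op C"
  unfolding C_def clinear_op_def
  by (simp add: clinear_add[OF TL] clinear_cscale[OF TL] R2.Msub.proj_add R2.Msub.proj_cscale)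

lemma C_bl: "bounded_linear C"
proof -
  have "bounded_linear (\<lambda>x. P (T x))"
    using bounded_linear_compose[OF R2.Msub.bounded_linear_proj bounded_op_bounded_linear[OF T]] .
  thus ?thesis by (simp add: C_def[abs_def])
qed

lemma CS: "C (S y) = S (T y)" unfolding C_def by (rule R2.G1)

lemma contr_S: "norm (C (S y)) \<le> norm (S y)"
proof -
  have "(norm (C (S y)))\<^sup>2 = q 2 (T y)" by (simp add: CS R2.norm_S_sq q_def)
  also have "\<dots> \<le> q 2 y"
    using q_rec[of 2 y] q_nonneg[of 3 y] by (simp add: numeral_eq_Suc)
  also have "\<dots> = (norm (S y))\<^sup>2" by (simp add: R2.norm_S_sq q_def)
  finally show ?thesis using power2_le_imp_le by fastforce
qed

lemma contraction: "m \<in> M \<Longrightarrow> norm (C m) \<le> norm m"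
proof -
  assume m: "m \<in> M"
  have cl: "closed {x. norm (C x) \<le> norm x}"
  proof -
    have "continuous_on UNIV C" using bounded_linear.continuous_on[OF C_bl continuous_on_id] by simp
    hence c1: "continuous_on UNIV (\<lambda>x. norm (C x))" by (intro continuous_intros)
    have c2: "continuous_on UNIV (\<lambda>x::'a. norm x)" by (intro continuous_intros)
    show ?thesis by (rule closed_Collect_le[OF c1 c2])
  qed
  have "range S \<subseteq> {x. norm (C x) \<le> norm x}" using contr_S by auto
  hence "closure (range S) \<subseteq> {x. norm (C x) \<le> norm x}" by (rule closure_minimal[OF _ cl])
  thus ?thesis using m R2.range_S_dense by auto
qed

end



context mainctx begin

lemma CnL: "clinear_op (C ^^ n)" by (rule funpow_clinear[OF CL])

lemma Cn_S: "(C ^^ n) (S z) = S ((T ^^ n) z)"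
  by (induction n) (simp_all add: CS)

lemma Cn_M: "m \<in> M \<Longrightarrow> (C ^^ n) m \<in> M \<and> norm ((C ^^ n) m) \<le> norm m"
proof (induction n)
  case 0 thus ?case by simp
next
  case (Suc n)
  have "norm (C ((C ^^ n) m)) \<le> norm ((C ^^ n) m)" using Suc by (intro contraction) auto
  thus ?case using Suc C_in by auto
qed

lemma cni: "completely_non_isometric_on M C"
  unfolding completely_non_isometric_on_def
proof
  assume "\<exists>N. csubspace N \<and> closed N \<and> N \<subseteq> M \<and> N \<noteq> {0} \<and> C ` N \<subseteq> N \<and> (\<forall>x\<in>N. norm (C x) = norm x)"
  then obtain N where N: "csubspace N" "N \<subseteq> M" "N \<noteq> {0}" "C ` N \<subseteq> N" "\<forall>x\<in>N. norm (C x) = norm x"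
    by blast
  obtain y where y: "y \<in> N" "y \<noteq> 0" using N(1,3) csubspace_0 by blast
  have iso: "(C ^^ n) y \<in> N \<and> norm ((C ^^ n) y) = norm y" for n
  proof (induction n)
    case 0 thus ?case using y by simp
  next
    case (Suc n) thus ?case using N(4,5) by auto
  qed
  define e where "e = norm y / 2"
  have e0: "e > 0" using y by (simp add: e_def)
  have "y \<in> closure (range S)" using y N(2) R2.range_S_dense by auto
  then obtain w where w: "w \<in> range S" "dist w y < e" using closure_approachable e0 by blast
  then obtain z where z: "w = S z" by auto
  obtain n where n: "q 2 ((T ^^ n) z) < e\<^sup>2" using small_q2[of "e\<^sup>2" z] e0 by auto
  have "(norm (S ((T ^^ n) z)))\<^sup>2 < e\<^sup>2" using n by (simp add: R2.norm_S_sq q_def)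
  hence nS: "norm (S ((T ^^ n) z)) < e" using e0 by (simp add: power_less_imp_less_base)
  have yM: "y \<in> M" using y N(2) by auto
  have dM: "y - S z \<in> M" using yM R2.S_in_M R2.Msub.sub csubspace_diff by blast
  have "norm y = norm ((C ^^ n) y)" using iso by simp
  also have "(C ^^ n) y = (C ^^ n) (y - S z) + (C ^^ n) (S z)"
    by (simp add: clinear_diff[OF CnL])
  also have "norm \<dots> \<le> norm ((C ^^ n) (y - S z)) + norm ((C ^^ n) (S z))" by (rule norm_triangle_ineq)
  also have "norm ((C ^^ n) (y - S z)) \<le> norm (y - S z)" using Cn_M[OF dM] by blast
  also have "norm (y - S z) < e" using w z by (simp add: dist_norm norm_minus_commute)
  also have "(C ^^ n) (S z) = S ((T ^^ n) z)" by (rule Cn_S)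
  finally have "norm y < e + e" using nS by simp
  thus False by (simp add: e_def)
qed

lemma adj_on_char: assumes y: "y \<in> M" shows "adj_on M C y = Ta y"
proof -
  define W where "W y = P (Ta y)" for y
  let ?Q = "\<lambda>S'. (\<forall>y\<in>M. S' y \<in> M) \<and> (\<forall>x\<in>M. \<forall>y\<in>M. cinner (C x) y = cinner x (S' y))"
  have QW: "?Q W"
  proof (intro conjI ballI)
    show "W y \<in> M" for y unfolding W_def by (rule R2.Msub.proj_in)
    fix x y assume x: "x \<in> M" and y: "y \<in> M"
    have "cinner (C x) y = cinner (T x) y" unfolding C_def by (rule R2.Msub.proj_inner_M'[OF y])
    also have "\<dots> = cinner x (Ta y)" by (rule adj1[OF T])
    also have "\<dots> = cinner x (W y)" unfolding W_def by (rule R2.Msub.proj_inner_M[OF x, symmetric])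
    finally show "cinner (C x) y = cinner x (W y)" .
  qed
  have Q: "?Q (adj_on M C)" unfolding adj_on_def by (rule someI[where P="?Q", OF QW])
  define d where "d = adj_on M C y - W y"
  have dM: "d \<in> M" unfolding d_def using Q QW y R2.Msub.sub csubspace_diff by blast
  have "cinner x d = 0" if x: "x \<in> M" for x
    using Q QW x y by (simp add: d_def cinner_diff_right)
  hence "cinner d d = 0" using dM by blast
  hence "adj_on M C y = W y" by (simp add: d_def)
  also have "W y = Ta y" unfolding W_def by (rule R2.Msub.proj_id[OF R2.G3[OF y]])
  finally show ?thesis .
qed

definition Dd :: "'a \<Rightarrow> 'a" where "Dd x = x - Ta (P (T x))"

lemma TaL: "clinear_op Ta" by (rule adj_clinear[OF T])

lemma Dd_M: "m \<in> M \<Longrightarrow> Dd m \<in> M"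
  unfolding Dd_def using R2.G3[OF R2.Msub.proj_in] R2.Msub.sub csubspace_diff by blast

lemma S_Dd: "S (Dd w) = Dd (S w)"
proof -
  have "S (Ta (P (T w))) = Ta (S (P (T w)))" by (rule R2.G4[OF R2.Msub.proj_in])
  also have "S (P (T w)) = S (T w)" by (rule R2.S_proj)
  also have "S (T w) = P (T (S w))" by (rule R2.G1[symmetric])
  finally have "S (Ta (P (T w))) = Ta (P (T (S w)))" .
  thus ?thesis by (simp add: Dd_def clinear_diff[OF R2.SL])
qed

lemma D3_eq: "D 3 x = D 2 (Dd x)"
proof -
  have "D 3 x = D 2 x - Ta (D 2 (T x))"
    using A_op_Suc[OF T, of 2 x] by (simp add: numeral_eq_Suc)
  also have "D 2 (T x) = S (P (T (S x)))" by (simp add: R2.G1 R2.SS[symmetric])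
  also have "Ta (S (P (T (S x)))) = S (Ta (P (T (S x))))" by (rule R2.G4[OF R2.Msub.proj_in, symmetric])
  also have "D 2 x = S (S x)" by (simp add: R2.SS)
  finally have "D 3 x = S (Dd (S x))" by (simp add: Dd_def clinear_diff[OF R2.SL])
  also have "\<dots> = S (S (Dd x))" by (simp add: S_Dd)
  finally show ?thesis by (simp add: R2.SS)
qed

lemma KI: assumes m: "m \<in> M" shows "Ta (P (T (Ta m))) = Ta (Ta (P (T m)))"
proof -
  have m3: "m \<in> R3.M" using m M_eq by simp
  have "D 2 (Dd (Ta m)) = D 3 (Ta m)" by (simp add: D3_eq)
  also have "\<dots> = Ta (D 3 m)" by (rule R3.G5[OF m3])
  also have "\<dots> = Ta (D 2 (Dd m))" by (simp add: D3_eq)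
  also have "\<dots> = D 2 (Ta (Dd m))" by (rule R2.G5[OF Dd_M[OF m], symmetric])
  finally have e: "D 2 (Dd (Ta m) - Ta (Dd m)) = 0" by (simp add: clinear_diff[OF R2.AL])
  have vM: "Dd (Ta m) - Ta (Dd m) \<in> M"
    using Dd_M[OF R2.G3[OF m]] R2.G3[OF Dd_M[OF m]] R2.Msub.sub csubspace_diff by blast
  have "Dd (Ta m) - Ta (Dd m) = 0" by (rule R2.M_inter_ker[OF vM e])
  thus ?thesis by (simp add: Dd_def clinear_diff[OF TaL])
qed

lemma quasinormal: "quasinormal_on M C"
  unfolding quasinormal_on_def
proof
  fix x assume x: "x \<in> M"
  have l: "C (adj_on M C (C x)) = P (T (Ta (P (T x))))"
    using adj_on_char[OF C_in, of x] by (simp add: C_def)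
  have r: "adj_on M C (C (C x)) = Ta (P (T (P (T x))))"
    using adj_on_char[OF C_in, of "C x"] by (simp add: C_def)
  define L where "L = P (T (Ta (P (T x))))"
  define R where "R = Ta (P (T (P (T x))))"
  have LM: "L \<in> M" unfolding L_def by (rule R2.Msub.proj_in)
  have RM: "R \<in> M" unfolding R_def by (rule R2.G3[OF R2.Msub.proj_in])
  have eq: "cinner u L = cinner u R" if u: "u \<in> M" for u
  proof -
    have "cinner u L = cinner u (T (Ta (P (T x))))" unfolding L_def by (rule R2.Msub.proj_inner_M[OF u])
    also have "\<dots> = cinner (Ta u) (Ta (P (T x)))" by (simp add: adj2[OF T])
    also have "\<dots> = cinner (T (Ta u)) (P (T x))" by (simp add: adj1[OF T])
    also have "\<dots> = cinner (P (T (Ta u))) (T x)" by (simp add: R2.Msub.proj_selfadj)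
    also have "\<dots> = cinner (Ta (P (T (Ta u)))) x" by (simp add: adj2[OF T])
    also have "\<dots> = cinner (Ta (Ta (P (T u)))) x" by (simp add: KI[OF u])
    finally have 1: "cinner u L = cinner (Ta (Ta (P (T u)))) x" .
    have "cinner u R = cinner (T u) (P (T (P (T x))))" unfolding R_def by (simp add: adj1[OF T])
    also have "\<dots> = cinner (P (T u)) (T (P (T x)))" by (simp add: R2.Msub.proj_selfadj)
    also have "\<dots> = cinner (Ta (P (T u))) (P (T x))" by (simp add: adj2[OF T])
    also have "\<dots> = cinner (P (Ta (P (T u)))) (T x)" by (simp add: R2.Msub.proj_selfadj)
    also have "P (Ta (P (T u))) = Ta (P (T u))" by (rule R2.Msub.proj_id[OF R2.G3[OF R2.Msub.proj_in]])
    also have "cinner (Ta (P (T u))) (T x) = cinner (Ta (Ta (P (T u)))) x" by (simp add: adj2[OF T])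
    finally have 2: "cinner u R = cinner (Ta (Ta (P (T u)))) x" .
    show ?thesis using 1 2 by simp
  qed
  have dM: "L - R \<in> M" using LM RM R2.Msub.sub csubspace_diff by blast
  have "cinner (L - R) (L - R) = 0" using eq[OF dM] by (simp add: cinner_diff_right)
  hence "L = R" by simp
  thus "C (adj_on M C (C x)) = adj_on M C (C (C x))" using l r by (simp add: L_def R_def)
qed

lemma main: "C ` M \<subseteq> M \<and> contraction_on M C \<and> quasinormal_on M C \<and> completely_non_isometric_on M C"
  using C_in contraction quasinormal cni by (auto simp: contraction_on_def)

end

theorem corollary4p6:
  fixes T :: "'a::chilbert \<Rightarrow> 'a"
  assumes "bounded_op T"
    and "completely_hyperexpansive T"
    and "\<forall>j\<in>{1,2,3}. regular (A_op j T) T"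
  shows "let M = closure (range (A_op 2 T)); C = compression M T in
           C ` M \<subseteq> M \<and> contraction_on M C \<and> quasinormal_on M C
           \<and> completely_non_isometric_on M C"
proof -
  interpret mainctx T using assms by unfold_locales auto
  have "compression M T = C" by (simp add: compression_def C_def[abs_def])
  moreover have "M = closure (range (A_op 2 T))" by (simp add: R2.M_def)
  ultimately show ?thesis using main by (simp add: Let_def)
qed


end
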